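(* Let $\mathcal{X}$ be a finite set, $\pi$ a probability distribution on $\mathcal{X}$ with $\pi(x)>0$ for all $x$, $p>1$, $\alpha>0$, and $\mathcal{N}$ a symmetric neighborhood mapping on $\mathcal{X}$ (with $x\notin\mathcal{N}(x)$) such that every stochastic matrix $K$ with $K(x,y)>0$ iff $y\in\mathcal{N}(x)$ is irreducible, and $\max_x|\mathcal{N}(x)|\le p^\alpha$. Suppose there exist $x^*\in\mathcal{X}$, an operator $\mathsf{T}\colon\mathcal{X}\to\mathcal{X}$ and a constant $\nu>\alpha$ such that $\mathsf{T}(x^* )=x^*$ and for every $x\neq x^*$, $\mathsf{T}(x)\in\mathcal{N}(x)$ and $\pi(\mathsf{T}(x))\ge p^\nu\pi(x)$. Let $h\colon(0,\infty)\to(0,\infty)$ be a non-decreasing balancing function, i.e. $h(u)=u\,h(1/u)$ for all $u>0$. Define $Z_h(x)=\sum_{y\in\mathcal{N}(x)}h(\pi(y)/\pi(x))$, $K_h(x,y)=\mathbf{1}_{\mathcal{N}(x)}(y)h(\pi(y)/\pi(x))/Z_h(x)$, $\pi_h$ the stationary distribution of $K_h$, $\omega=\pi/\pi_h$, and the transition rate matrix $Q_h(x,y)=K_h(x,y)/\omega(x)$ for $x\ne y$, $Q_h(x,x)=-\sum_{x'\neq x}Q_h(x,x')$. Then $$\mathrm{Gap}(Q_h)\ge\kappa(p,\alpha,\nu)\frac{h(p^\nu)}{\mathbb{E}_\pi[Z_h]},\qquad \kappa(p,\alpha,\nu)=\tfrac12\{1-p^{-(\nu-\alpha)/2}\}^3.$$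 Further, $2\,\mathrm{Gap}(Q_h)/\kappa(p,\alpha,\nu)\ge p^{\nu-\alpha}$ if $h(u)=1+u$; $\ge p^{\nu-2\alpha}$ if $h(u)=\min(1,u)$; and $\ge p^{\nu/2}/(p^{2\alpha-\nu}+p^{\alpha-\nu/2})$ if $h(u)=\sqrt{u}$.
   Context: $\mathbb{E}_\pi[Z_h]=\sum_x\pi(x)Z_h(x)$. For an irreducible reversible transition rate matrix $Q$ with eigenvalues $0=\lambda_1(Q)>\lambda_2(Q)\ge\cdots$, $\mathrm{Gap}(Q)=-\lambda_2(Q)$. *)

theory Defs
  imports "HOL-Analysis.Analysis"
begin

definition stochastic :: "('a::finite \<Rightarrow> 'a \<Rightarrow> real) \<Rightarrow> bool" where
  "stochastic K \<longleftrightarrow> (\<forall>x y. K x y \<ge> 0) \<and> (\<forall>x. (\<Sum>y\<in>UNIV. K x y) = 1)"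

text \<open>Irreducibility: every state can reach every state through transitions of positive
  probability (i.e. for all x y there is n with K^n(x,y) > 0).\<close>
definition irreducible_mat :: "('a::finite \<Rightarrow> 'a \<Rightarrow> real) \<Rightarrow> bool" where
  "irreducible_mat K \<longleftrightarrow> (\<forall>x y. (x, y) \<in> {(a, b). K a b > 0}\<^sup>*)"

text \<open>Stationary distribution (unique for irreducible K).\<close>
definition stationary_dist :: "('a::finite \<Rightarrow> 'a \<Rightarrow> real) \<Rightarrow> ('a \<Rightarrow> real)" where
  "stationary_dist K = (THE \<mu>. (\<forall>x. \<mu> x \<ge> 0) \<and> (\<Sum>x\<in>UNIV. \<mu> x) = 1 \<and>
                          (\<forall>y. (\<Sum>x\<in>UNIV. \<mu> x * K x y) = \<mu> y))"

definition Zh :: "(real \<Rightarrow> real) \<Rightarrow> ('a \<Rightarrow> real) \<Rightarrow> ('a \<Rightarrow> 'a set) \<Rightarrow> 'a \<Rightarrow> real" where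
  "Zh h \<pi> N x = (\<Sum>y\<in>N x. h (\<pi> y / \<pi> x))"

definition Kh :: "(real \<Rightarrow> real) \<Rightarrow> ('a \<Rightarrow> real) \<Rightarrow> ('a \<Rightarrow> 'a set) \<Rightarrow> 'a \<Rightarrow> 'a \<Rightarrow> real" where
  "Kh h \<pi> N x y = (if y \<in> N x then h (\<pi> y / \<pi> x) / Zh h \<pi> N x else 0)"

definition Qh :: "(real \<Rightarrow> real) \<Rightarrow> ('a::finite \<Rightarrow> real) \<Rightarrow> ('a \<Rightarrow> 'a set) \<Rightarrow> 'a \<Rightarrow> 'a \<Rightarrow> real" where
  "Qh h \<pi> N x y =
     (let \<pi>h = stationary_dist (Kh h \<pi> N); \<omega> = (\<lambda>z. \<pi> z / \<pi>h z);
          off = (\<lambda>a b. Kh h \<pi> N a b / \<omega> a)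
      in if x \<noteq> y then off x y else - (\<Sum>x'\<in>UNIV - {x}. off x x'))"

definition expect :: "('a::finite \<Rightarrow> real) \<Rightarrow> ('a \<Rightarrow> real) \<Rightarrow> real" where
  "expect \<pi> f = (\<Sum>x\<in>UNIV. \<pi> x * f x)"

definition to_mat :: "('a::finite \<Rightarrow> 'a \<Rightarrow> real) \<Rightarrow> real^'a^'a" where
  "to_mat A = (\<chi> x y. A x y)"

definition is_eigenvalue :: "real^'n^'n \<Rightarrow> real \<Rightarrow> bool" where
  "is_eigenvalue A \<mu> \<longleftrightarrow> (\<exists>v. v \<noteq> 0 \<and> A *v v = \<mu> *\<^sub>R v)"

definition eigenspace_of :: "real^'n^'n \<Rightarrow> real \<Rightarrow> (real^'n) set" where
  "eigenspace_of A \<mu> = {v. A *v v = \<mu> *\<^sub>R v}"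

text \<open>Number of eigenvalues \<ge> t counted with multiplicity (for reversible, hence
  diagonalizable, matrices geometric = algebraic multiplicity).\<close>
definition eig_count :: "real^'n^'n \<Rightarrow> real \<Rightarrow> nat" where
  "eig_count A t = (\<Sum>\<mu>\<in>{\<mu>. is_eigenvalue A \<mu> \<and> t \<le> \<mu>}. dim (eigenspace_of A \<mu>))"

text \<open>k-th largest eigenvalue, counted with multiplicity.\<close>
definition eig_k :: "real^'n^'n \<Rightarrow> nat \<Rightarrow> real" where
  "eig_k A k = Max {\<mu>. is_eigenvalue A \<mu> \<and> k \<le> eig_count A \<mu>}"

definition Gap :: "('a::finite \<Rightarrow> 'a \<Rightarrow> real) \<Rightarrow> real" where
  "Gap Q = - eig_k (to_mat Q) 2"

definition kappa :: "real \<Rightarrow> real \<Rightarrow> real \<Rightarrow> real" where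
  "kappa p \<alpha> \<nu> = (1/2) * (1 - p powr (-(\<nu> - \<alpha>) / 2)) ^ 3"

end

theory Submission
  imports Defs
begin

locale setting =
  fixes \<pi> :: "'a::finite \<Rightarrow> real"
    and N :: "'a \<Rightarrow> 'a set"
    and p \<alpha> \<nu> :: real
    and xstar :: 'a
    and T :: "'a \<Rightarrow> 'a"
    and h :: "real \<Rightarrow> real"
  assumes card2: "CARD('a) \<ge> 2"
    and pi_pos: "\<forall>x. \<pi> x > 0"
    and pi_sum: "(\<Sum>x\<in>UNIV. \<pi> x) = 1"
    and p_gt: "p > 1"
    and alpha_pos: "\<alpha> > 0"
    and N_sym: "\<forall>x y. y \<in> N x \<longleftrightarrow> x \<in> N y"
    and N_irrefl: "\<forall>x. x \<notin> N x"
    and N_card: "\<forall>x. real (card (N x)) \<le> p powr \<alpha>"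
    and nu_gt: "\<nu> > \<alpha>"
    and T_fix: "T xstar = xstar"
    and T_nbr: "\<forall>x. x \<noteq> xstar \<longrightarrow> T x \<in> N x \<and> \<pi> (T x) \<ge> p powr \<nu> * \<pi> x"
    and h_pos: "\<forall>u>0. h u > 0"
    and h_mono: "mono_on {0<..} h"
    and h_bal: "\<forall>u>0. h u = u * h (1 / u)"
begin

definition "Pn = p powr \<nu>"
definition "Pa = p powr \<alpha>"

lemma Pn_gt: "Pn > 1" unfolding Pn_def using p_gt nu_gt alpha_pos
  using powr_less_mono[of 0 \<nu> p] by simp

lemma Pa_pos: "Pa > 0" unfolding Pa_def using p_gt by simp

lemma pi_le1: "\<pi> x \<le> 1"
proof -
  have "\<pi> x \<le> (\<Sum>y\<in>UNIV. \<pi> y)"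
    by (rule member_le_sum) (use pi_pos in \<open>auto intro: less_imp_le\<close>)
  thus ?thesis using pi_sum by simp
qed

lemma T_ne: "x \<noteq> xstar \<Longrightarrow> T x \<noteq> x"
  using T_nbr N_irrefl by metis

lemma funpow_fix: "(T ^^ k) xstar = xstar"
  by (induction k) (auto simp: T_fix)

lemma orbit_growth:
  "(\<forall>k<n. (T ^^ k) x \<noteq> xstar) \<Longrightarrow> \<pi> ((T ^^ n) x) \<ge> Pn ^ n * \<pi> x"
proof (induction n)
  case 0 then show ?case by simp
next
  case (Suc n)
  then have ih: "\<pi> ((T ^^ n) x) \<ge> Pn ^ n * \<pi> x" by auto
  have "(T ^^ n) x \<noteq> xstar" using Suc.prems by auto
  then have "\<pi> (T ((T ^^ n) x)) \<ge> Pn * \<pi> ((T ^^ n) x)" using T_nbr Pn_def by auto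
  moreover have "Pn * \<pi> ((T ^^ n) x) \<ge> Pn * (Pn ^ n * \<pi> x)"
    using ih Pn_gt by (intro mult_left_mono) auto
  ultimately show ?case by (simp add: algebra_simps)
qed

lemma reach: "\<exists>M. \<forall>x. (T ^^ M) x = xstar"
proof -
  define m where "m = Min (range \<pi>)"
  have m_pos: "m > 0" unfolding m_def using pi_pos by (subst Min_gr_iff) auto
  have m_le: "m \<le> \<pi> x" for x unfolding m_def by (rule Min_le) auto
  obtain M where M: "1 / m < Pn ^ M" using real_arch_pow[OF Pn_gt] by blast
  have "(T ^^ M) x = xstar" for x
  proof (rule ccontr)
    assume ne: "(T ^^ M) x \<noteq> xstar"
    have "\<forall>k<M. (T ^^ k) x \<noteq> xstar"
    proof (intro allI impI)
      fix k assume "k < M"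
      show "(T ^^ k) x \<noteq> xstar"
      proof
        assume "(T ^^ k) x = xstar"
        then have "(T ^^ (M - k + k)) x = xstar" by (simp add: funpow_add funpow_fix)
        with \<open>k < M\<close> ne show False by simp
      qed
    qed
    from orbit_growth[OF this] have "\<pi> ((T ^^ M) x) \<ge> Pn ^ M * \<pi> x" .
    moreover have "Pn ^ M * \<pi> x \<ge> Pn ^ M * m" using m_le Pn_gt by (intro mult_left_mono) auto
    moreover have "Pn ^ M * m > 1" using M m_pos by (simp add: field_simps)
    ultimately show False using pi_le1[of "(T ^^ M) x"] by linarith
  qed
  then show ?thesis by blast
qed


lemma N_ne: "N x \<noteq> {}"
proof (cases "x = xstar")
  case False then show ?thesis using T_nbr by auto
next
  case True
  obtain z :: 'a where z: "z \<noteq> xstar"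
  proof -
    have "\<not> (UNIV :: 'a set) \<subseteq> {xstar}"
    proof
      assume "(UNIV :: 'a set) \<subseteq> {xstar}"
      then have "CARD('a) \<le> card {xstar}" by (intro card_mono) auto
      then show False using card2 by simp
    qed
    then show ?thesis using that by blast
  qed
  obtain M where M: "\<forall>x. (T ^^ M) x = xstar" using reach by blast
  define k where "k = (LEAST k. (T ^^ k) z = xstar)"
  have k: "(T ^^ k) z = xstar" unfolding k_def by (rule LeastI[of _ M]) (use M in auto)
  have k0: "k \<noteq> 0"
  proof
    assume "k = 0" with k z show False by simp
  qed
  define w where "w = (T ^^ (k - 1)) z"
  have "w \<noteq> xstar" unfolding w_def using not_less_Least[of "k - 1" "\<lambda>k. (T ^^ k) z = xstar"] k0
    unfolding k_def[symmetric] by auto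
  moreover have "T w = xstar" unfolding w_def using k k0
    by (metis Suc_pred' bot_nat_0.not_eq_extremum comp_apply funpow.simps(2))
  ultimately have "xstar \<in> N w" using T_nbr by metis
  then show ?thesis using True N_sym by auto
qed

definition "Z = Zh h \<pi> N"
definition "E = expect \<pi> Z"
definition "q x y = (if y \<in> N x then h (\<pi> y / \<pi> x) / E else 0)"
definition "pih x = \<pi> x * Z x / E"

lemma hq_pos: "h (\<pi> y / \<pi> x) > 0" using h_pos pi_pos by simp

lemma Z_pos: "Z x > 0"
  unfolding Z_def Zh_def using N_ne[of x] hq_pos by (intro sum_pos) auto

lemma E_pos: "E > 0"
  unfolding E_def expect_def using Z_pos pi_pos by (intro sum_pos) auto

lemma bal: "\<pi> x * h (\<pi> y / \<pi> x) = \<pi> y * h (\<pi> x / \<pi> y)"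
proof -
  have u0: "\<pi> y / \<pi> x > 0" using pi_pos by simp
  have e: "h (\<pi> y / \<pi> x) = (\<pi> y / \<pi> x) * h (1 / (\<pi> y / \<pi> x))" using h_bal u0 by blast
  have i: "1 / (\<pi> y / \<pi> x) = \<pi> x / \<pi> y" by simp
  have "\<pi> x * h (\<pi> y / \<pi> x) = \<pi> x * ((\<pi> y / \<pi> x) * h (\<pi> x / \<pi> y))"
    using e unfolding i by simp
  also have "\<dots> = \<pi> y * h (\<pi> x / \<pi> y)" using pi_pos[rule_format, of x] by (simp add: field_simps)
  finally show ?thesis .
qed

lemma sum_if_UNIV: "(\<Sum>x\<in>(UNIV::'a set). if x \<in> A then f x else 0) = (\<Sum>x\<in>A. (f x :: real))"
  by (rule sum.mono_neutral_cong_right) auto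

lemma pih_stat: "(\<Sum>x\<in>UNIV. pih x * Kh h \<pi> N x y) = pih y"
proof -
  have "(\<Sum>x\<in>UNIV. pih x * Kh h \<pi> N x y) = (\<Sum>x\<in>UNIV. if x \<in> N y then \<pi> y * h (\<pi> x / \<pi> y) / E else 0)"
  proof (rule sum.cong[OF refl])
    fix x
    have "Z x > 0" by (rule Z_pos)
    then show "pih x * Kh h \<pi> N x y = (if x \<in> N y then \<pi> y * h (\<pi> x / \<pi> y) / E else 0)"
      unfolding pih_def Kh_def Z_def[symmetric] using N_sym bal[of x y] by auto
  qed
  also have "\<dots> = (\<Sum>x\<in>N y. \<pi> y * h (\<pi> x / \<pi> y) / E)" by (rule sum_if_UNIV)
  also have "\<dots> = pih y" unfolding pih_def Z_def Zh_def
    by (simp add: sum_divide_distrib sum_distrib_left)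
  finally show ?thesis .
qed

lemma pih_pos: "pih x > 0" unfolding pih_def using pi_pos Z_pos E_pos by simp

lemma pih_sum: "(\<Sum>x\<in>UNIV. pih x) = 1"
  unfolding pih_def using E_pos by (simp add: sum_divide_distrib[symmetric] E_def expect_def)

lemma K_pos_iff: "Kh h \<pi> N x y > 0 \<longleftrightarrow> y \<in> N x"
  unfolding Kh_def Z_def[symmetric] using Z_pos[of x] hq_pos by auto

lemma K_nonneg: "Kh h \<pi> N x y \<ge> 0"
  unfolding Kh_def Z_def[symmetric] using Z_pos[of x] hq_pos[of y x] by auto

lemma stat_unique:
  assumes nn: "\<forall>x. \<mu> x \<ge> 0" and s1: "(\<Sum>x\<in>UNIV. \<mu> x) = 1"
    and st: "\<forall>y. (\<Sum>x\<in>UNIV. \<mu> x * Kh h \<pi> N x y) = \<mu> y"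
  shows "\<mu> = pih"
proof -
  define r where "r x = \<mu> x / pih x" for x
  define c where "c = Min (range r)"
  have c_le: "c \<le> r x" for x unfolding c_def by (rule Min_le) auto
  have "c \<in> range r" unfolding c_def by (rule Min_in) auto
  then obtain y0 where y0: "c = r y0" by auto
  define d where "d x = \<mu> x - c * pih x" for x
  have d_nn: "d x \<ge> 0" for x using c_le[of x] pih_pos[of x] unfolding d_def r_def
    by (simp add: field_simps)
  have d0: "d y0 = 0" using y0 pih_pos[of y0] unfolding d_def r_def by simp
  have d_st: "(\<Sum>x\<in>UNIV. d x * Kh h \<pi> N x y) = d y" for y
  proof -
    have "(\<Sum>x\<in>UNIV. d x * Kh h \<pi> N x y) = (\<Sum>x\<in>UNIV. \<mu> x * Kh h \<pi> N x y - c * (pih x * Kh h \<pi> N x y))"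
      by (rule sum.cong[OF refl]) (simp add: d_def left_diff_distrib)
    also have "\<dots> = (\<Sum>x\<in>UNIV. \<mu> x * Kh h \<pi> N x y) - c * (\<Sum>x\<in>UNIV. pih x * Kh h \<pi> N x y)"
      by (simp only: sum_subtractf sum_distrib_left)
    also have "\<dots> = \<mu> y - c * pih y" using st pih_stat[of y] by simp
    finally show ?thesis unfolding d_def .
  qed
  have zprop: "d x = 0" if "d y = 0" "y \<in> N x" for x y
  proof -
    have "(\<Sum>x\<in>UNIV. d x * Kh h \<pi> N x y) = 0" using d_st[of y] that by simp
    then have "\<forall>x\<in>UNIV. d x * Kh h \<pi> N x y = 0"
      using sum_nonneg_eq_0_iff[of UNIV "\<lambda>x. d x * Kh h \<pi> N x y"] d_nn K_nonneg by simp
    then have "d x * Kh h \<pi> N x y = 0" by auto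
    then show ?thesis using K_pos_iff[of x y] that by auto
  qed
  have fwd: "d (T y) = 0" if "d y = 0" for y
  proof (cases "y = xstar")
    case True then show ?thesis using that T_fix by simp
  next
    case False
    then have "T y \<in> N y" using T_nbr by auto
    then have "y \<in> N (T y)" using N_sym by auto
    then show ?thesis using zprop[OF that] by auto
  qed
  have bwd: "d x = 0" if "d (T x) = 0" for x
  proof (cases "x = xstar")
    case True then show ?thesis using that T_fix by simp
  next
    case False
    then have "T x \<in> N x" using T_nbr by auto
    then show ?thesis using zprop[OF that] by auto
  qed
  have fwdk: "d ((T ^^ k) y) = 0" if "d y = 0" for k y
    using that by (induction k) (auto intro: fwd)
  have bwdk: "d x = 0" if "d ((T ^^ k) x) = 0" for k x
    using that
  proof (induction k arbitrary: x)
    case 0 then show ?case by simp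
  next
    case (Suc k)
    then have "d ((T ^^ k) (T x)) = 0" by (simp add: funpow_Suc_right del: funpow.simps)
    then have "d (T x) = 0" using Suc.IH by blast
    then show ?case by (rule bwd)
  qed
  obtain M where M: "\<forall>x. (T ^^ M) x = xstar" using reach by blast
  have "d xstar = 0" using fwdk[OF d0, of M] M by simp
  then have dz: "d x = 0" for x using bwdk[of M x] M by simp
  then have mu: "\<mu> x = c * pih x" for x unfolding d_def by (simp add: algebra_simps)
  have "(\<Sum>x\<in>UNIV. \<mu> x) = c * (\<Sum>x\<in>UNIV. pih x)" unfolding mu by (simp only: sum_distrib_left)
  then have "c = 1" using s1 pih_sum by simp
  then show ?thesis using mu by auto
qed

lemma stat_eq: "stationary_dist (Kh h \<pi> N) = pih"
  unfolding stationary_dist_def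
proof (rule the_equality)
  show "(\<forall>x. 0 \<le> pih x) \<and> (\<Sum>x\<in>UNIV. pih x) = 1 \<and> (\<forall>y. (\<Sum>x\<in>UNIV. pih x * Kh h \<pi> N x y) = pih y)"
    using pih_pos pih_sum pih_stat by (auto intro: less_imp_le)
next
  fix \<mu> assume "(\<forall>x. 0 \<le> \<mu> x) \<and> (\<Sum>x\<in>UNIV. \<mu> x) = 1 \<and> (\<forall>y. (\<Sum>x\<in>UNIV. \<mu> x * Kh h \<pi> N x y) = \<mu> y)"
  then have a: "\<forall>x. 0 \<le> \<mu> x" and b: "(\<Sum>x\<in>UNIV. \<mu> x) = 1"
    and c: "\<forall>y. (\<Sum>x\<in>UNIV. \<mu> x * Kh h \<pi> N x y) = \<mu> y" by auto
  show "\<mu> = pih" by (rule stat_unique[OF a b c])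
qed

lemma q_diag: "q x x = 0" unfolding q_def using N_irrefl by auto

lemma Q_eq: "Qh h \<pi> N x y = (if x \<noteq> y then q x y else - (\<Sum>y'\<in>UNIV. q x y'))"
proof -
  have off: "Kh h \<pi> N a b / (\<pi> a / pih a) = q a b" for a b
    unfolding Kh_def q_def pih_def Z_def[symmetric] using pi_pos[rule_format, of a] Z_pos[of a] E_pos
    by (auto simp: field_simps)
  have "\<forall>x. (\<Sum>y'\<in>UNIV - {x}. q x y') = (\<Sum>y'\<in>UNIV. q x y')"
    by (simp add: sum_diff1 q_diag)
  then show ?thesis unfolding Qh_def Let_def stat_eq off by presburger
qed

end

context setting begin

definition "th = p powr (-(\<nu> - \<alpha>) / 2)"
definition "beta = Pa / Pn"

lemma th_pos: "th > 0" unfolding th_def using p_gt by simp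
lemma th_lt1: "th < 1" unfolding th_def using p_gt nu_gt powr_less_mono[of "-(\<nu> - \<alpha>) / 2" 0 p] by simp
lemma th_sq: "th ^ 2 = beta"
proof -
  have "th ^ 2 = p powr (-(\<nu> - \<alpha>) / 2) * p powr (-(\<nu> - \<alpha>) / 2)" unfolding th_def by (simp add: power2_eq_square)
  also have "\<dots> = p powr (\<alpha> - \<nu>)" by (simp add: powr_add[symmetric])
  also have "\<dots> = beta" unfolding beta_def Pa_def Pn_def by (simp add: powr_diff)
  finally show ?thesis .
qed

lemma Pn_pos: "Pn > 0" using Pn_gt by simp

lemma Acount:
  "z \<noteq> xstar \<Longrightarrow> (\<Sum>x\<in>UNIV. if (T ^^ k) x = z then \<pi> x else 0) \<le> beta ^ k * \<pi> z"
proof (induction k arbitrary: z)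
  case 0 then show ?case by simp
next
  case (Suc k)
  define A where "A y = (\<Sum>x\<in>UNIV. if (T ^^ k) x = y then \<pi> x else 0)" for y
  have bnn: "0 \<le> beta ^ k * \<pi> z / Pn" using Pa_pos Pn_pos pi_pos[rule_format, of z] unfolding beta_def
    by (intro divide_nonneg_pos mult_nonneg_nonneg zero_le_power) (auto intro: less_imp_le)
  have A_nn: "A y \<ge> 0" for y unfolding A_def using pi_pos by (intro sum_nonneg) (auto intro: less_imp_le)
  have "(\<Sum>x\<in>UNIV. if (T ^^ Suc k) x = z then \<pi> x else 0)
      = (\<Sum>x\<in>UNIV. \<Sum>y\<in>UNIV. if (T ^^ k) x = y then (if T y = z then \<pi> x else 0) else 0)"
    by (rule sum.cong[OF refl]) (simp add: sum.delta)
  also have "\<dots> = (\<Sum>y\<in>UNIV. \<Sum>x\<in>UNIV. if (T ^^ k) x = y then (if T y = z then \<pi> x else 0) else 0)"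
    by (rule sum.swap)
  also have "\<dots> = (\<Sum>y\<in>UNIV. if T y = z then A y else 0)"
    unfolding A_def
  proof (rule sum.cong[OF refl])
    fix y
    show "(\<Sum>x\<in>UNIV. if (T ^^ k) x = y then (if T y = z then \<pi> x else 0) else 0) =
      (if T y = z then \<Sum>x\<in>UNIV. if (T ^^ k) x = y then \<pi> x else 0 else 0)"
      by (cases "T y = z") (simp_all only: simp_thms(6) if_True if_False if_cancel sum.neutral_const)
  qed
  also have "\<dots> \<le> (\<Sum>y\<in>UNIV. if y \<in> N z then beta ^ k * \<pi> z / Pn else 0)"
  proof (rule sum_mono)
    fix y
    show "(if T y = z then A y else 0) \<le> (if y \<in> N z then beta ^ k * \<pi> z / Pn else 0)"
    proof (cases "T y = z")
      case True
      then have y: "y \<noteq> xstar" using Suc.prems T_fix by auto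
      then have "z \<in> N y" "\<pi> z \<ge> Pn * \<pi> y" using T_nbr True Pn_def by auto
      then have yN: "y \<in> N z" and piy: "\<pi> y \<le> \<pi> z / Pn" using N_sym Pn_pos by (auto simp: field_simps)
      have "A y \<le> beta ^ k * \<pi> y" unfolding A_def by (rule Suc.IH[OF y])
      also have "\<dots> \<le> beta ^ k * (\<pi> z / Pn)"
        using piy beta_def Pa_pos Pn_pos by (intro mult_left_mono) auto
      finally show ?thesis using True yN by simp
    next
      case False
      then show ?thesis using bnn by auto
    qed
  qed
  also have "\<dots> = real (card (N z)) * (beta ^ k * \<pi> z / Pn)"
    by (simp add: sum_if_UNIV)
  also have "\<dots> \<le> Pa * (beta ^ k * \<pi> z / Pn)"
    using N_card Pa_def bnn by (intro mult_right_mono) auto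
  also have "\<dots> = beta ^ Suc k * \<pi> z" unfolding beta_def by (simp add: field_simps)
  finally show ?case .
qed

lemma weighted_CS:
  fixes a w :: "nat \<Rightarrow> real"
  assumes "\<And>k. k \<in> I \<Longrightarrow> w k > 0"
  shows "(\<Sum>k\<in>I. a k)\<^sup>2 \<le> (\<Sum>k\<in>I. w k) * (\<Sum>k\<in>I. (a k)\<^sup>2 / w k)"
proof -
  have "(\<Sum>k\<in>I. sqrt (w k) * (a k / sqrt (w k)))\<^sup>2 \<le> (\<Sum>k\<in>I. (sqrt (w k))\<^sup>2) * (\<Sum>k\<in>I. (a k / sqrt (w k))\<^sup>2)"
    by (rule Cauchy_Schwarz_ineq_sum)
  moreover have "(\<Sum>k\<in>I. sqrt (w k) * (a k / sqrt (w k))) = (\<Sum>k\<in>I. a k)"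
  proof (rule sum.cong[OF refl])
    fix k assume "k \<in> I"
    then have "w k > 0" by (rule assms)
    then show "sqrt (w k) * (a k / sqrt (w k)) = a k" by simp
  qed
  moreover have "(\<Sum>k\<in>I. (sqrt (w k))\<^sup>2) = (\<Sum>k\<in>I. w k)"
    using assms by (intro sum.cong) (auto intro: less_imp_le)
  moreover have "(\<Sum>k\<in>I. (a k / sqrt (w k))\<^sup>2) = (\<Sum>k\<in>I. (a k)\<^sup>2 / w k)"
    using assms by (intro sum.cong) (auto simp: power_divide intro: less_imp_le)
  ultimately show ?thesis by simp
qed

lemma geo_le: "(\<Sum>k<M. th ^ k) \<le> 1 / (1 - th)"
proof -
  have "(\<Sum>k<M. th ^ k) = (1 - th ^ M) / (1 - th)" using th_lt1 by (simp add: sum_gp_strict)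
  also have "\<dots> \<le> 1 / (1 - th)" using th_lt1 th_pos by (intro divide_right_mono) auto
  finally show ?thesis .
qed

lemma core:
  fixes v :: "'a \<Rightarrow> real"
  shows "(\<Sum>x\<in>UNIV. \<pi> x * (v x - v xstar)\<^sup>2) \<le> (\<Sum>x\<in>UNIV. \<pi> x * (v x - v (T x))\<^sup>2) / (1 - th)\<^sup>2"
proof -
  define g where "g x = v x - v (T x)" for x
  define S where "S = (\<Sum>x\<in>UNIV. \<pi> x * (g x)\<^sup>2)"
  have gx: "g xstar = 0" unfolding g_def using T_fix by simp
  obtain M where M: "\<forall>x. (T ^^ M) x = xstar" using reach by blast
  have tel: "v x - v xstar = (\<Sum>k<M. g ((T ^^ k) x))" for x
  proof -
    have "(\<Sum>k<M. g ((T ^^ k) x)) = (\<Sum>k<M. v ((T ^^ k) x) - v ((T ^^ Suc k) x))"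
      unfolding g_def by simp
    also have "\<dots> = v ((T ^^ 0) x) - v ((T ^^ M) x)" by (rule sum_lessThan_telescope')
    finally show ?thesis using M by simp
  qed
  have pt: "(v x - v xstar)\<^sup>2 \<le> (1 / (1 - th)) * (\<Sum>k<M. (g ((T ^^ k) x))\<^sup>2 / th ^ k)" for x
  proof -
    have "(v x - v xstar)\<^sup>2 \<le> (\<Sum>k<M. th ^ k) * (\<Sum>k<M. (g ((T ^^ k) x))\<^sup>2 / th ^ k)"
      unfolding tel by (rule weighted_CS) (use th_pos in auto)
    also have "\<dots> \<le> (1 / (1 - th)) * (\<Sum>k<M. (g ((T ^^ k) x))\<^sup>2 / th ^ k)"
      using geo_le th_pos by (intro mult_right_mono sum_nonneg) auto
    finally show ?thesis .
  qed
  have inner: "(\<Sum>x\<in>UNIV. \<pi> x * (g ((T ^^ k) x))\<^sup>2) \<le> beta ^ k * S" for k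
  proof -
    have "(\<Sum>x\<in>UNIV. \<pi> x * (g ((T ^^ k) x))\<^sup>2)
        = (\<Sum>x\<in>UNIV. \<Sum>z\<in>UNIV. if (T ^^ k) x = z then \<pi> x * (g z)\<^sup>2 else 0)"
      by (rule sum.cong[OF refl]) (simp add: sum.delta)
    also have "\<dots> = (\<Sum>z\<in>UNIV. \<Sum>x\<in>UNIV. if (T ^^ k) x = z then \<pi> x * (g z)\<^sup>2 else 0)"
      by (rule sum.swap)
    also have "\<dots> = (\<Sum>z\<in>UNIV. (g z)\<^sup>2 * (\<Sum>x\<in>UNIV. if (T ^^ k) x = z then \<pi> x else 0))"
      by (rule sum.cong[OF refl]) (auto simp: sum_distrib_left intro!: sum.cong)
    also have "\<dots> \<le> (\<Sum>z\<in>UNIV. (g z)\<^sup>2 * (beta ^ k * \<pi> z))"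
    proof (rule sum_mono)
      fix z
      show "(g z)\<^sup>2 * (\<Sum>x\<in>UNIV. if (T ^^ k) x = z then \<pi> x else 0) \<le> (g z)\<^sup>2 * (beta ^ k * \<pi> z)"
      proof (cases "z = xstar")
        case True then show ?thesis using gx by simp
      next
        case False then show ?thesis using Acount by (intro mult_left_mono) auto
      qed
    qed
    also have "\<dots> = beta ^ k * S" unfolding S_def by (simp add: sum_distrib_left algebra_simps)
    finally show ?thesis .
  qed
  have "(\<Sum>x\<in>UNIV. \<pi> x * (v x - v xstar)\<^sup>2) \<le> (\<Sum>x\<in>UNIV. \<pi> x * ((1 / (1 - th)) * (\<Sum>k<M. (g ((T ^^ k) x))\<^sup>2 / th ^ k)))"
    using pt pi_pos by (intro sum_mono mult_left_mono) (auto intro: less_imp_le)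
  also have "\<dots> = (1 / (1 - th)) * (\<Sum>k<M. (\<Sum>x\<in>UNIV. \<pi> x * (g ((T ^^ k) x))\<^sup>2) / th ^ k)"
    by (simp add: sum_distrib_left sum_divide_distrib algebra_simps sum.swap[of _ UNIV "{..<M}"])
  also have "\<dots> \<le> (1 / (1 - th)) * (\<Sum>k<M. beta ^ k * S / th ^ k)"
    using inner th_pos th_lt1 by (intro mult_left_mono sum_mono divide_right_mono) auto
  also have "(\<Sum>k<M. beta ^ k * S / th ^ k) = (\<Sum>k<M. th ^ k) * S"
  proof -
    have "beta ^ k * S / th ^ k = th ^ k * S" for k
      using th_pos unfolding th_sq[symmetric] by (simp add: power_mult[symmetric] power2_eq_square power_mult_distrib field_simps)
    then show ?thesis by (simp add: sum_distrib_right)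
  qed
  also have "(1 / (1 - th)) * ((\<Sum>k<M. th ^ k) * S) \<le> (1 / (1 - th)) * ((1 / (1 - th)) * S)"
    using geo_le th_lt1 pi_pos unfolding S_def
    by (intro mult_left_mono mult_right_mono sum_nonneg mult_nonneg_nonneg) (auto intro: less_imp_le)
  also have "\<dots> = S / (1 - th)\<^sup>2" by (simp add: power2_eq_square)
  finally show ?thesis unfolding S_def g_def .
qed

end

context setting begin

definition "Qm = Qh h \<pi> N"

lemma pi_sq_nn: "0 \<le> \<pi> x * a\<^sup>2"
  using pi_pos[rule_format, of x] by simp

lemma q_nn: "q x y \<ge> 0" unfolding q_def using hq_pos[of y x] E_pos by auto

lemma Q_alt: "Qm x y = q x y - (if x = y then (\<Sum>z\<in>UNIV. q x z) else 0)"
  unfolding Qm_def Q_eq using q_diag by auto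

lemma c_sym: "\<pi> x * q x y = \<pi> y * q y x"
proof (cases "y \<in> N x")
  case True
  then have "x \<in> N y" using N_sym by auto
  then show ?thesis using True bal[of x y] unfolding q_def by simp
next
  case False
  then have "x \<notin> N y" using N_sym by auto
  then show ?thesis using False unfolding q_def by simp
qed

lemma Q_sym: "\<pi> x * Qm x y = \<pi> y * Qm y x"
  unfolding Q_alt using c_sym[of x y] by (auto simp: algebra_simps)

lemma Q_row: "(\<Sum>y\<in>UNIV. Qm x y) = 0"
  unfolding Q_alt by (simp add: sum_subtractf)

lemma Qv: "(\<Sum>y\<in>UNIV. Qm x y * v y) = (\<Sum>y\<in>UNIV. q x y * (v y - v x))"
proof -
  have "(\<Sum>y\<in>UNIV. Qm x y * v y) = (\<Sum>y\<in>UNIV. q x y * v y - (if x = y then (\<Sum>z\<in>UNIV. q x z) * v y else 0))"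
    unfolding Q_alt by (rule sum.cong[OF refl]) (simp add: left_diff_distrib)
  also have "\<dots> = (\<Sum>y\<in>UNIV. q x y * v y) - (\<Sum>z\<in>UNIV. q x z) * v x"
    by (simp add: sum_subtractf)
  also have "\<dots> = (\<Sum>y\<in>UNIV. q x y * (v y - v x))"
    by (simp add: sum_subtractf right_diff_distrib sum_distrib_right)
  finally show ?thesis .
qed

lemma self_adj:
  "(\<Sum>x\<in>UNIV. \<pi> x * f x * (\<Sum>y\<in>UNIV. Qm x y * g y)) = (\<Sum>x\<in>UNIV. \<pi> x * g x * (\<Sum>y\<in>UNIV. Qm x y * f y))"
proof -
  have "(\<Sum>x\<in>UNIV. \<pi> x * f x * (\<Sum>y\<in>UNIV. Qm x y * g y)) = (\<Sum>x\<in>UNIV. \<Sum>y\<in>UNIV. (\<pi> x * Qm x y) * f x * g y)"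
    by (simp add: sum_distrib_left algebra_simps)
  also have "\<dots> = (\<Sum>y\<in>UNIV. \<Sum>x\<in>UNIV. (\<pi> x * Qm x y) * f x * g y)" by (rule sum.swap)
  also have "\<dots> = (\<Sum>y\<in>UNIV. \<Sum>x\<in>UNIV. (\<pi> y * Qm y x) * f x * g y)" by (simp add: Q_sym)
  also have "\<dots> = (\<Sum>y\<in>UNIV. \<pi> y * g y * (\<Sum>x\<in>UNIV. Qm y x * f x))"
    by (simp add: sum_distrib_left algebra_simps)
  finally show ?thesis .
qed

definition "D v = (\<Sum>x\<in>UNIV. \<Sum>y\<in>UNIV. \<pi> x * q x y * (v x - v y)\<^sup>2)"

lemma dir: "(\<Sum>x\<in>UNIV. \<pi> x * v x * (\<Sum>y\<in>UNIV. Qm x y * v y)) = - D v / 2"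
proof -
  define S where "S = (\<Sum>x\<in>UNIV. \<Sum>y\<in>UNIV. \<pi> x * q x y * (v x * (v y - v x)))"
  have L: "(\<Sum>x\<in>UNIV. \<pi> x * v x * (\<Sum>y\<in>UNIV. Qm x y * v y)) = S"
    unfolding Qv S_def by (simp add: sum_distrib_left algebra_simps)
  have "S = (\<Sum>y\<in>UNIV. \<Sum>x\<in>UNIV. \<pi> x * q x y * (v x * (v y - v x)))"
    unfolding S_def by (rule sum.swap)
  also have "\<dots> = (\<Sum>y\<in>UNIV. \<Sum>x\<in>UNIV. \<pi> y * q y x * (v x * (v y - v x)))"
    by (simp add: c_sym)
  finally have S2: "S = (\<Sum>x\<in>UNIV. \<Sum>y\<in>UNIV. \<pi> x * q x y * (v y * (v x - v y)))" .
  have "S + S = (\<Sum>x\<in>UNIV. \<Sum>y\<in>UNIV. \<pi> x * q x y * (v x * (v y - v x)) + \<pi> x * q x y * (v y * (v x - v y)))"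
  proof -
    have "S + S = (\<Sum>x\<in>UNIV. \<Sum>y\<in>UNIV. \<pi> x * q x y * (v x * (v y - v x))) + (\<Sum>x\<in>UNIV. \<Sum>y\<in>UNIV. \<pi> x * q x y * (v y * (v x - v y)))"
      using S2 unfolding S_def by linarith
    then show ?thesis by (simp add: sum.distrib)
  qed
  also have "\<dots> = (\<Sum>x\<in>UNIV. \<Sum>y\<in>UNIV. - (\<pi> x * q x y * (v x - v y)\<^sup>2))"
    by (rule sum.cong[OF refl], rule sum.cong[OF refl]) (simp add: power2_eq_square algebra_simps)
  also have "\<dots> = - D v" unfolding D_def by (simp add: sum_negf)
  finally show ?thesis using L by simp
qed

lemma D_lower: "D v \<ge> (h Pn / E) * (\<Sum>x\<in>UNIV. \<pi> x * (v x - v (T x))\<^sup>2)"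
proof -
  have hPn: "h Pn > 0" using h_pos Pn_pos by auto
  have "(h Pn / E) * (\<pi> x * (v x - v (T x))\<^sup>2) \<le> (\<Sum>y\<in>UNIV. \<pi> x * q x y * (v x - v y)\<^sup>2)" for x
  proof (cases "x = xstar")
    case True
    then have "(h Pn / E) * (\<pi> x * (v x - v (T x))\<^sup>2) = 0" using T_fix by simp
    moreover have "0 \<le> (\<Sum>y\<in>UNIV. \<pi> x * q x y * (v x - v y)\<^sup>2)"
    proof (rule sum_nonneg)
      fix y
      have "0 \<le> \<pi> x * q x y" using pi_pos[rule_format, of x] q_nn[of x y] by simp
      then show "0 \<le> \<pi> x * q x y * (v x - v y)\<^sup>2" by simp
    qed
    ultimately show ?thesis by linarith
  next
    case False
    then have Tx: "T x \<in> N x" and piT: "\<pi> (T x) \<ge> Pn * \<pi> x" using T_nbr Pn_def by auto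
    have px: "\<pi> x > 0" using pi_pos by auto
    have r: "Pn \<le> \<pi> (T x) / \<pi> x" using piT px by (simp add: field_simps)
    have "h Pn \<le> h (\<pi> (T x) / \<pi> x)"
      using h_mono r Pn_pos px pi_pos by (intro mono_onD[OF h_mono]) auto
    then have "h Pn / E \<le> q x (T x)" unfolding q_def using Tx E_pos by (simp add: divide_right_mono)
    then have "(h Pn / E) * (\<pi> x * (v x - v (T x))\<^sup>2) \<le> \<pi> x * q x (T x) * (v x - v (T x))\<^sup>2"
    proof -
      have "(\<pi> x * (v x - v (T x))\<^sup>2) * (h Pn / E) \<le> (\<pi> x * (v x - v (T x))\<^sup>2) * q x (T x)"
        by (rule mult_left_mono) (use px \<open>h Pn / E \<le> q x (T x)\<close> in auto)
      then show ?thesis by (simp only: ac_simps)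
    qed
    also have "\<dots> \<le> (\<Sum>y\<in>UNIV. \<pi> x * q x y * (v x - v y)\<^sup>2)"
      by (rule member_le_sum[where f = "\<lambda>y. \<pi> x * q x y * (v x - v y)\<^sup>2"]) (use px q_nn in auto)
    finally show ?thesis .
  qed
  then have "(\<Sum>x\<in>UNIV. (h Pn / E) * (\<pi> x * (v x - v (T x))\<^sup>2)) \<le> D v"
    unfolding D_def by (rule sum_mono)
  then show ?thesis by (simp add: sum_distrib_left)
qed

lemma hPE_pos: "h Pn / E > 0"
proof -
  have "h Pn > 0" using h_pos Pn_pos by blast
  then show ?thesis using E_pos by simp
qed

definition "gam = (h Pn / E) * (1 - th)\<^sup>2 / 2"

lemma gam_pos: "gam > 0"
proof -
  have "(1 - th)\<^sup>2 > 0" using th_lt1 by simp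
  then have "(h Pn / E) * (1 - th)\<^sup>2 > 0" using hPE_pos by (rule mult_pos_pos[rotated])
  then show ?thesis unfolding gam_def by (rule divide_pos_pos) simp
qed

lemma poinc: "D v \<ge> 2 * gam * (\<Sum>x\<in>UNIV. \<pi> x * (v x - v xstar)\<^sup>2)"
proof -
  have c: "(\<Sum>x\<in>UNIV. \<pi> x * (v x - v xstar)\<^sup>2) * (1 - th)\<^sup>2 \<le> (\<Sum>x\<in>UNIV. \<pi> x * (v x - v (T x))\<^sup>2)"
  proof -
    have t: "(1 - th)\<^sup>2 > 0" using th_lt1 by simp
    show ?thesis using core[of v] by (subst (asm) pos_le_divide_eq[OF t])
  qed
  have "2 * gam * (\<Sum>x\<in>UNIV. \<pi> x * (v x - v xstar)\<^sup>2) = (h Pn / E) * ((\<Sum>x\<in>UNIV. \<pi> x * (v x - v xstar)\<^sup>2) * (1 - th)\<^sup>2)"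
  proof -
    have "2 * gam = h Pn / E * (1 - th)\<^sup>2" unfolding gam_def by simp
    then show ?thesis by (simp only: mult.assoc mult.commute mult.left_commute)
  qed
  also have "\<dots> \<le> (h Pn / E) * (\<Sum>x\<in>UNIV. \<pi> x * (v x - v (T x))\<^sup>2)"
    using c hPE_pos by (intro mult_left_mono) auto
  also have "\<dots> \<le> D v" by (rule D_lower)
  finally show ?thesis .
qed

lemma eig_fun_neg:
  assumes ev: "\<And>x. (\<Sum>y\<in>UNIV. Qm x y * f y) = \<mu> * f x" and nz: "f x0 \<noteq> 0" and mu0: "\<mu> \<noteq> 0"
  shows "\<mu> \<le> - gam"
proof -
  have "(\<Sum>x\<in>UNIV. \<pi> x * 1 * (\<Sum>y\<in>UNIV. Qm x y * f y)) = (\<Sum>x\<in>UNIV. \<pi> x * f x * (\<Sum>y\<in>UNIV. Qm x y * 1))"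
    by (rule self_adj)
  also have "\<dots> = 0" by (simp add: Q_row)
  finally have z: "(\<Sum>x\<in>UNIV. \<pi> x * 1 * (\<Sum>y\<in>UNIV. Qm x y * f y)) = 0" .
  have "(\<Sum>x\<in>UNIV. \<pi> x * 1 * (\<Sum>y\<in>UNIV. Qm x y * f y)) = (\<Sum>x\<in>UNIV. \<pi> x * 1 * (\<mu> * f x))"
    by (simp only: ev)
  also have "\<dots> = \<mu> * (\<Sum>x\<in>UNIV. \<pi> x * f x)" by (simp add: sum_distrib_left algebra_simps)
  finally have "\<mu> * (\<Sum>x\<in>UNIV. \<pi> x * f x) = 0" using z by simp
  then have mean0: "(\<Sum>x\<in>UNIV. \<pi> x * f x) = 0" using mu0 by simp
  define G where "G = (\<Sum>x\<in>UNIV. \<pi> x * (f x)\<^sup>2)"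
  have Gpos: "G > 0" unfolding G_def
  proof (rule sum_pos2[where i = x0])
    show "0 < \<pi> x0 * (f x0)\<^sup>2" using nz pi_pos by simp
  next
    fix i show "0 \<le> \<pi> i * (f i)\<^sup>2" using pi_pos[rule_format, of i] by simp
  qed simp_all
  have "(\<Sum>x\<in>UNIV. \<pi> x * (f x - f xstar)\<^sup>2) = (\<Sum>x\<in>UNIV. \<pi> x * (f x)\<^sup>2 - 2 * f xstar * (\<pi> x * f x) + (f xstar)\<^sup>2 * \<pi> x)"
    by (rule sum.cong[OF refl]) (simp add: power2_eq_square algebra_simps)
  also have "\<dots> = G - 2 * f xstar * (\<Sum>x\<in>UNIV. \<pi> x * f x) + (f xstar)\<^sup>2 * (\<Sum>x\<in>UNIV. \<pi> x)"
    unfolding G_def by (simp only: sum.distrib sum_subtractf sum_distrib_left)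
  also have "\<dots> = G + (f xstar)\<^sup>2" using mean0 pi_sum by simp
  finally have var: "(\<Sum>x\<in>UNIV. \<pi> x * (f x - f xstar)\<^sup>2) \<ge> G" by simp
  have "\<mu> * G = (\<Sum>x\<in>UNIV. \<pi> x * f x * (\<Sum>y\<in>UNIV. Qm x y * f y))"
    unfolding G_def ev by (simp add: sum_distrib_left power2_eq_square algebra_simps)
  also have "\<dots> = - D f / 2" by (rule dir)
  also have "\<dots> \<le> - gam * G"
  proof -
    have "2 * gam * G \<le> 2 * gam * (\<Sum>x\<in>UNIV. \<pi> x * (f x - f xstar)\<^sup>2)"
      using var gam_pos by (intro mult_left_mono) auto
    then show ?thesis using poinc[of f] by linarith
  qed
  finally have "\<mu> * G \<le> (- gam) * G" by simp
  then show ?thesis using Gpos mult_right_le_imp_le by blast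
qed

lemma eig_fun_zero:
  assumes ev: "\<And>x. (\<Sum>y\<in>UNIV. Qm x y * f y) = 0"
  shows "f x = f xstar"
proof -
  have "- D f / 2 = (\<Sum>x\<in>UNIV. \<pi> x * f x * (\<Sum>y\<in>UNIV. Qm x y * f y))" by (rule dir[symmetric])
  also have "\<dots> = 0" unfolding ev by simp
  finally have D0: "D f = 0" by simp
  have hp: "h Pn / E > 0" by (rule hPE_pos)
  have "(h Pn / E) * (\<Sum>x\<in>UNIV. \<pi> x * (f x - f (T x))\<^sup>2) \<le> 0" using D_lower[of f] D0 by simp
  then have "(\<Sum>x\<in>UNIV. \<pi> x * (f x - f (T x))\<^sup>2) \<le> 0" using hp mult_pos_pos not_le by metis
  moreover have "\<forall>x\<in>UNIV. \<pi> x * (f x - f (T x))\<^sup>2 \<ge> 0" using pi_sq_nn by blast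
  ultimately have "\<forall>x\<in>UNIV. \<pi> x * (f x - f (T x))\<^sup>2 = 0"
    using sum_nonneg_eq_0_iff[of UNIV "\<lambda>x. \<pi> x * (f x - f (T x))\<^sup>2"] by (simp add: sum_nonneg order_antisym)
  then have fT: "f (T y) = f y" for y using pi_pos[rule_format, of y] by (simp, metis less_irrefl)
  have "f ((T ^^ k) y) = f y" for k y by (induction k) (auto simp: fT)
  moreover obtain M where "\<forall>x. (T ^^ M) x = xstar" using reach by blast
  ultimately show ?thesis by metis
qed

lemma sa_orth:
  assumes evf: "\<And>x. (\<Sum>y\<in>UNIV. Qm x y * f y) = \<mu> * f x"
    and evg: "\<And>x. (\<Sum>y\<in>UNIV. Qm x y * g y) = \<mu>' * g x" and ne: "\<mu> \<noteq> \<mu>'"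
  shows "(\<Sum>x\<in>UNIV. \<pi> x * f x * g x) = 0"
proof -
  have "\<mu>' * (\<Sum>x\<in>UNIV. \<pi> x * f x * g x) = (\<Sum>x\<in>UNIV. \<pi> x * f x * (\<Sum>y\<in>UNIV. Qm x y * g y))"
    unfolding evg by (simp add: sum_distrib_left algebra_simps)
  also have "\<dots> = (\<Sum>x\<in>UNIV. \<pi> x * g x * (\<Sum>y\<in>UNIV. Qm x y * f y))" by (rule self_adj)
  also have "\<dots> = \<mu> * (\<Sum>x\<in>UNIV. \<pi> x * f x * g x)"
    unfolding evf by (simp add: sum_distrib_left algebra_simps)
  finally show ?thesis using ne by simp
qed

end


lemma quad_real:
  fixes a b :: real
  assumes h: "\<And>t. 0 \<le> 2 * t * a + t\<^sup>2 * b"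
  shows "a = 0"
proof (rule ccontr)
  assume a0: "a \<noteq> 0"
  define s where "s = \<bar>b\<bar> + 1"
  have s0: "s > 0" unfolding s_def by simp
  define t where "t = - a / s"
  have "t\<^sup>2 * b \<le> t\<^sup>2 * s" unfolding s_def by (intro mult_left_mono) auto
  moreover have "2 * t * a + t\<^sup>2 * s = - (a\<^sup>2 / s)" unfolding t_def using s0
    by (simp add: field_simps power2_eq_square)
  moreover have "a\<^sup>2 / s > 0" using a0 s0 by simp
  ultimately have "2 * t * a + t\<^sup>2 * b < 0" by linarith
  with h[of t] show False by simp
qed

lemma quad_zero:
  fixes c :: "'b::finite \<Rightarrow> 'b \<Rightarrow> real"
  assumes sym: "\<And>x y. c x y = c y x"
    and nn: "\<And>f. 0 \<le> (\<Sum>x\<in>UNIV. \<Sum>y\<in>UNIV. c x y * f x * f y)"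
    and z: "(\<Sum>x\<in>UNIV. \<Sum>y\<in>UNIV. c x y * f0 x * f0 y) = 0"
  shows "(\<Sum>y\<in>UNIV. c x0 y * f0 y) = 0"
proof -
  define d where "d x = (if x = x0 then 1 else (0::real))" for x
  define a where "a = (\<Sum>y\<in>UNIV. c x0 y * f0 y)"
  define b where "b = c x0 x0"
  have s1: "(\<Sum>x\<in>UNIV. \<Sum>y\<in>UNIV. c x y * d x * f0 y) = a"
  proof -
    have "(\<Sum>y\<in>UNIV. c x y * d x * f0 y) = (if x = x0 then a else 0)" for x
      unfolding d_def a_def by simp
    then show ?thesis by simp
  qed
  have s2: "(\<Sum>x\<in>UNIV. \<Sum>y\<in>UNIV. c x y * f0 x * d y) = a"
  proof -
    have "(\<Sum>y\<in>UNIV. c x y * f0 x * d y) = c x0 x * f0 x" for x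
      unfolding d_def using sym[of x x0] by (simp add: if_distrib cong: if_cong)
    then show ?thesis unfolding a_def by simp
  qed
  have s3: "(\<Sum>x\<in>UNIV. \<Sum>y\<in>UNIV. c x y * d x * d y) = b"
  proof -
    have "(\<Sum>y\<in>UNIV. c x y * d x * d y) = (if x = x0 then b else 0)" for x
      unfolding d_def b_def by (simp add: if_distrib cong: if_cong)
    then show ?thesis by simp
  qed
  have "0 \<le> 2 * t * a + t\<^sup>2 * b" for t
  proof -
    have "(\<Sum>x\<in>UNIV. \<Sum>y\<in>UNIV. c x y * (f0 x + t * d x) * (f0 y + t * d y))
      = (\<Sum>x\<in>UNIV. \<Sum>y\<in>UNIV. c x y * f0 x * f0 y + t * (c x y * d x * f0 y) + t * (c x y * f0 x * d y) + t\<^sup>2 * (c x y * d x * d y))"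
      by (intro sum.cong refl) (simp add: algebra_simps power2_eq_square)
    also have "\<dots> = (\<Sum>x\<in>UNIV. \<Sum>y\<in>UNIV. c x y * f0 x * f0 y) + t * (\<Sum>x\<in>UNIV. \<Sum>y\<in>UNIV. c x y * d x * f0 y)
       + t * (\<Sum>x\<in>UNIV. \<Sum>y\<in>UNIV. c x y * f0 x * d y) + t\<^sup>2 * (\<Sum>x\<in>UNIV. \<Sum>y\<in>UNIV. c x y * d x * d y)"
      by (simp add: sum.distrib sum_distrib_left)
    also have "\<dots> = 2 * t * a + t\<^sup>2 * b" using z s1 s2 s3 by simp
    finally show ?thesis using nn[of "\<lambda>x. f0 x + t * d x"] by simp
  qed
  then show ?thesis unfolding a_def by (rule quad_real)
qed

context setting begin

definition "Am = to_mat Qm"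

lemma Am_mult: "(Am *v v) $ x = (\<Sum>y\<in>UNIV. Qm x y * v $ y)"
  unfolding Am_def to_mat_def by (simp add: matrix_vector_mult_def)

lemma eig_fun: "Am *v v = \<mu> *\<^sub>R v \<Longrightarrow> (\<Sum>y\<in>UNIV. Qm x y * v $ y) = \<mu> * v $ x"
  by (metis Am_mult vector_scaleR_component real_scaleR_def)

lemma vec_nz: "v \<noteq> (0 :: real^'a) \<Longrightarrow> \<exists>x. v $ x \<noteq> 0"
  by (metis vec_eq_iff zero_index)

lemma eigval_cases: "is_eigenvalue Am \<mu> \<Longrightarrow> \<mu> = 0 \<or> \<mu> \<le> - gam"
proof -
  assume "is_eigenvalue Am \<mu>"
  then obtain v where v: "v \<noteq> 0" "Am *v v = \<mu> *\<^sub>R v" unfolding is_eigenvalue_def by blast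
  obtain x0 where x0: "v $ x0 \<noteq> 0" using vec_nz[OF v(1)] by blast
  show ?thesis
  proof (cases "\<mu> = 0")
    case False
    have ev: "\<And>x. (\<Sum>y\<in>UNIV. Qm x y * v $ y) = \<mu> * v $ x" using eig_fun[OF v(2)] by simp
    have "\<mu> \<le> - gam" by (rule eig_fun_neg[OF ev x0 False])
    then show ?thesis by simp
  qed simp
qed

definition "one = ((\<chi> x. 1) :: real^'a)"

lemma one_nz: "one \<noteq> 0" unfolding one_def by (metis vec_lambda_beta zero_index zero_neq_one)

lemma one_eig: "Am *v one = 0 *\<^sub>R one"
  by (simp add: vec_eq_iff Am_mult one_def Q_row)

lemma zero_eig: "is_eigenvalue Am 0"
  unfolding is_eigenvalue_def using one_nz one_eig by blast

lemma eig0_const: "v \<in> eigenspace_of Am 0 \<Longrightarrow> v = (v $ xstar) *\<^sub>R one"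
proof -
  assume "v \<in> eigenspace_of Am 0"
  then have "Am *v v = 0 *\<^sub>R v" unfolding eigenspace_of_def by simp
  then have "\<And>x. (\<Sum>y\<in>UNIV. Qm x y * v $ y) = 0" using eig_fun by fastforce
  then have "v $ x = v $ xstar" for x by (rule eig_fun_zero[where f = "\<lambda>x. v $ x"])
  then show ?thesis by (simp add: vec_eq_iff one_def)
qed

lemma dim_eig0: "dim (eigenspace_of Am 0) \<le> 1"
proof -
  have "eigenspace_of Am 0 \<subseteq> span {one}"
  proof
    fix v assume "v \<in> eigenspace_of Am 0"
    then have "v = (v $ xstar) *\<^sub>R one" by (rule eig0_const)
    moreover have "(v $ xstar) *\<^sub>R one \<in> span {one}" by (intro span_mul span_base) simp
    ultimately show "v \<in> span {one}" by simp
  qed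
  then have "dim (eigenspace_of Am 0) \<le> card {one}" by (rule dim_le_card) simp
  then show ?thesis by simp
qed

lemma dim_pos: "is_eigenvalue Am \<mu> \<Longrightarrow> dim (eigenspace_of Am \<mu>) \<ge> 1"
proof -
  assume "is_eigenvalue Am \<mu>"
  then obtain v where v: "v \<noteq> 0" "Am *v v = \<mu> *\<^sub>R v" unfolding is_eigenvalue_def by blast
  then have "v \<in> eigenspace_of Am \<mu>" unfolding eigenspace_of_def by simp
  then have "\<not> eigenspace_of Am \<mu> \<subseteq> {0}" using v(1) by blast
  then have "dim (eigenspace_of Am \<mu>) \<noteq> 0" using dim_eq_0 by blast
  then show ?thesis by (metis One_nat_def Suc_leI neq0_conv)
qed

end

context setting begin

lemma eig_finite: "finite {\<mu>. is_eigenvalue Am \<mu>}"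
proof -
  have "finite {\<mu>. is_eigenvalue Am \<mu>} \<and> card {\<mu>. is_eigenvalue Am \<mu>} \<le> CARD('a)"
  proof (rule finite_if_finite_subsets_card_bdd)
    fix G assume GE: "G \<subseteq> {\<mu>. is_eigenvalue Am \<mu>}" and fG: "finite G"
    define ev where "ev \<mu> = (SOME v. v \<noteq> 0 \<and> Am *v v = \<mu> *\<^sub>R v)" for \<mu>
    have ev: "ev \<mu> \<noteq> 0 \<and> Am *v ev \<mu> = \<mu> *\<^sub>R ev \<mu>" if "\<mu> \<in> G" for \<mu>
    proof -
      have "\<exists>v. v \<noteq> 0 \<and> Am *v v = \<mu> *\<^sub>R v" using GE that unfolding is_eigenvalue_def by blast
      then show ?thesis unfolding ev_def by (rule someI_ex)
    qed
    define u where "u \<mu> = (\<chi> x. sqrt (\<pi> x) * ev \<mu> $ x)" for \<mu>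
    have inner_u: "u \<mu> \<bullet> u \<mu>' = (\<Sum>x\<in>UNIV. \<pi> x * ev \<mu> $ x * ev \<mu>' $ x)" for \<mu> \<mu>'
    proof -
      have "u \<mu> \<bullet> u \<mu>' = (\<Sum>x\<in>UNIV. (sqrt (\<pi> x) * ev \<mu> $ x) * (sqrt (\<pi> x) * ev \<mu>' $ x))"
        unfolding u_def inner_vec_def by simp
      also have "\<dots> = (\<Sum>x\<in>UNIV. \<pi> x * ev \<mu> $ x * ev \<mu>' $ x)"
      proof (rule sum.cong[OF refl])
        fix x
        have "sqrt (\<pi> x) * sqrt (\<pi> x) = \<pi> x" using pi_pos[rule_format, of x] by simp
        then show "(sqrt (\<pi> x) * ev \<mu> $ x) * (sqrt (\<pi> x) * ev \<mu>' $ x) = \<pi> x * ev \<mu> $ x * ev \<mu>' $ x"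
          by (metis mult.assoc mult.left_commute)
      qed
      finally show ?thesis .
    qed
    have orth: "u \<mu> \<bullet> u \<mu>' = 0" if "\<mu> \<in> G" "\<mu>' \<in> G" "\<mu> \<noteq> \<mu>'" for \<mu> \<mu>'
    proof -
      have e1: "\<And>x. (\<Sum>y\<in>UNIV. Qm x y * ev \<mu> $ y) = \<mu> * ev \<mu> $ x" using ev[OF that(1)] eig_fun by blast
      have e2: "\<And>x. (\<Sum>y\<in>UNIV. Qm x y * ev \<mu>' $ y) = \<mu>' * ev \<mu>' $ x" using ev[OF that(2)] eig_fun by blast
      show ?thesis unfolding inner_u by (rule sa_orth[OF e1 e2 that(3)])
    qed
    have unz: "u \<mu> \<noteq> 0" if mG: "\<mu> \<in> G" for \<mu>
    proof -
      have "ev \<mu> \<noteq> 0" using ev[OF mG] by blast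
      then obtain x where x: "ev \<mu> $ x \<noteq> 0" using vec_nz by blast
      have "u \<mu> $ x \<noteq> 0" unfolding u_def using x pi_pos[rule_format, of x] by simp
      then show ?thesis by auto
    qed
    have inj: "inj_on u G"
    proof (rule inj_onI)
      fix \<mu> \<mu>' assume a: "\<mu> \<in> G" "\<mu>' \<in> G" "u \<mu> = u \<mu>'"
      show "\<mu> = \<mu>'"
      proof (rule ccontr)
        assume "\<mu> \<noteq> \<mu>'"
        then have "u \<mu> \<bullet> u \<mu>' = 0" using orth a by blast
        then have "u \<mu> \<bullet> u \<mu> = 0" using a(3) by simp
        then show False using unz[OF a(1)] by simp
      qed
    qed
    have "pairwise orthogonal (u ` G)"
      unfolding pairwise_def orthogonal_def using orth by blast
    moreover have "0 \<notin> u ` G" using unz by auto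
    ultimately have "independent (u ` G)" by (rule pairwise_orthogonal_independent)
    then have "card (u ` G) \<le> DIM(real^'a)" using independent_bound by blast
    then show "card G \<le> CARD('a)" using card_image[OF inj] by simp
  qed
  then show ?thesis by blast
qed

end

context setting begin

lemma exists_other: "\<exists>z::'a. z \<noteq> xstar"
proof (rule ccontr)
  assume "\<not> (\<exists>z::'a. z \<noteq> xstar)"
  then have "(UNIV :: 'a set) \<subseteq> {xstar}" by auto
  then have "CARD('a) \<le> card {xstar}" by (intro card_mono) auto
  then show False using card2 by simp
qed

lemma Qdiag_neg: "z \<noteq> xstar \<Longrightarrow> Qm z z < 0"
proof -
  assume z: "z \<noteq> xstar"
  then have Tz: "T z \<in> N z" using T_nbr by auto
  have "q z (T z) > 0" unfolding q_def using Tz hq_pos E_pos by simp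
  also have "q z (T z) \<le> (\<Sum>y\<in>UNIV. q z y)" by (rule member_le_sum) (use q_nn in auto)
  finally have "(\<Sum>y\<in>UNIV. q z y) > 0" .
  then show ?thesis unfolding Q_alt using q_diag by simp
qed

lemma exists_neg_eig: "\<exists>m. is_eigenvalue Am m \<and> m < 0"
proof -
  define F where "F v = (\<Sum>x\<in>UNIV. \<pi> x * v $ x * (\<Sum>y\<in>UNIV. Qm x y * v $ y))" for v :: "real^'a"
  define G where "G v = (\<Sum>x\<in>UNIV. \<pi> x * (v $ x)\<^sup>2)" for v :: "real^'a"
  have Gpos: "G v > 0" if vnz: "v \<noteq> 0" for v
  proof -
    obtain x0 where x0: "v $ x0 \<noteq> 0" using vec_nz[OF vnz] by blast
    show ?thesis unfolding G_def
    proof (rule sum_pos2[where i = x0])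
      show "0 < \<pi> x0 * (v $ x0)\<^sup>2" using x0 pi_pos by simp
    next
      fix i show "0 \<le> \<pi> i * (v $ i)\<^sup>2" by (rule pi_sq_nn)
    qed simp_all
  qed
  have Fhom: "F (c *\<^sub>R v) = c\<^sup>2 * F v" for c v
  proof -
    have i: "(\<Sum>y\<in>UNIV. Qm x y * (c *\<^sub>R v) $ y) = c * (\<Sum>y\<in>UNIV. Qm x y * v $ y)" for x
      by (simp add: sum_distrib_left mult.left_commute)
    show ?thesis unfolding F_def i by (simp add: sum_distrib_left power2_eq_square mult.assoc mult.left_commute)
  qed
  have Ghom: "G (c *\<^sub>R v) = c\<^sup>2 * G v" for c v
    unfolding G_def by (simp add: sum_distrib_left power2_eq_square mult.assoc mult.left_commute)
  define S where "S = sphere (0::real^'a) 1"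
  have cS: "compact S" unfolding S_def by simp
  obtain v1 :: "real^'a" where "norm v1 = 1" using vector_choose_size[of 1] by auto
  then have nS: "S \<noteq> {}" unfolding S_def by auto
  have Snz: "v \<noteq> 0" if "v \<in> S" for v using that unfolding S_def by auto
  have contF: "continuous_on S F" unfolding F_def by (intro continuous_intros)
  have contG: "continuous_on S G" unfolding G_def by (intro continuous_intros)
  have cont: "continuous_on S (\<lambda>v. F v / G v)"
    by (rule continuous_on_divide[OF contF contG]) (use Gpos Snz in fastforce)
  obtain v0 where v0S: "v0 \<in> S" and v0min: "\<forall>w\<in>S. F v0 / G v0 \<le> F w / G w"
    using continuous_attains_inf[OF cS nS cont] by blast
  define m where "m = F v0 / G v0"
  have v0nz: "v0 \<noteq> 0" using Snz v0S by blast
  have low: "m * G w \<le> F w" for w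
  proof (cases "w = 0")
    case True then show ?thesis unfolding F_def G_def by simp
  next
    case False
    define c where "c = 1 / norm w"
    have c0: "c \<noteq> 0" unfolding c_def using False by simp
    have "c *\<^sub>R w \<in> S" unfolding S_def c_def using False by simp
    then have "m \<le> F (c *\<^sub>R w) / G (c *\<^sub>R w)" unfolding m_def using v0min by blast
    also have "\<dots> = F w / G w" unfolding Fhom Ghom using c0 by simp
    finally show ?thesis using Gpos[OF False] by (simp add: le_divide_eq)
  qed
  have eq0: "F v0 = m * G v0" unfolding m_def using Gpos[OF v0nz] by simp
  define c where "c x y = \<pi> x * Qm x y - m * (if x = y then \<pi> x else 0)" for x y
  have csym: "c x y = c y x" for x y unfolding c_def using Q_sym[of x y] by auto
  have Bc: "(\<Sum>x\<in>UNIV. \<Sum>y\<in>UNIV. c x y * f x * f y) = F (\<chi> x. f x) - m * G (\<chi> x. f x)" for f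
  proof -
    have "(\<Sum>y\<in>UNIV. c x y * f x * f y) = \<pi> x * f x * (\<Sum>y\<in>UNIV. Qm x y * f y) - m * (\<pi> x * (f x)\<^sup>2)" for x
    proof -
      have "(\<Sum>y\<in>UNIV. c x y * f x * f y) = (\<Sum>y\<in>UNIV. \<pi> x * f x * (Qm x y * f y) - (if x = y then m * (\<pi> x * (f x)\<^sup>2) else 0))"
        unfolding c_def by (rule sum.cong[OF refl]) (auto simp: algebra_simps power2_eq_square)
      also have "\<dots> = \<pi> x * f x * (\<Sum>y\<in>UNIV. Qm x y * f y) - m * (\<pi> x * (f x)\<^sup>2)"
        by (simp add: sum_subtractf sum_distrib_left)
      finally show ?thesis .
    qed
    then show ?thesis unfolding F_def G_def by (simp add: sum_subtractf sum_distrib_left)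
  qed
  have nn: "0 \<le> (\<Sum>x\<in>UNIV. \<Sum>y\<in>UNIV. c x y * f x * f y)" for f
    unfolding Bc using low[of "\<chi> x. f x"] by simp
  have z: "(\<Sum>x\<in>UNIV. \<Sum>y\<in>UNIV. c x y * v0 $ x * v0 $ y) = 0"
    unfolding Bc using eq0 by (simp add: vec_lambda_eta)
  have "(\<Sum>y\<in>UNIV. c x y * v0 $ y) = 0" for x
    by (rule quad_zero[OF csym nn z])
  then have ev: "(\<Sum>y\<in>UNIV. Qm x y * v0 $ y) = m * v0 $ x" for x
  proof -
    have "(\<Sum>y\<in>UNIV. c x y * v0 $ y) = \<pi> x * (\<Sum>y\<in>UNIV. Qm x y * v0 $ y) - \<pi> x * (m * v0 $ x)"
    proof -
      have "(\<Sum>y\<in>UNIV. c x y * v0 $ y) = (\<Sum>y\<in>UNIV. \<pi> x * (Qm x y * v0 $ y) - (if x = y then \<pi> x * (m * v0 $ x) else 0))"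
        unfolding c_def by (rule sum.cong[OF refl]) (auto simp: algebra_simps)
      also have "\<dots> = \<pi> x * (\<Sum>y\<in>UNIV. Qm x y * v0 $ y) - \<pi> x * (m * v0 $ x)"
        by (simp add: sum_subtractf sum_distrib_left)
      finally show ?thesis .
    qed
    then have "\<pi> x * ((\<Sum>y\<in>UNIV. Qm x y * v0 $ y) - m * v0 $ x) = 0"
      using \<open>(\<Sum>y\<in>UNIV. c x y * v0 $ y) = 0\<close> by (simp add: right_diff_distrib)
    then show ?thesis using pi_pos[rule_format, of x] by simp
  qed
  have "Am *v v0 = m *\<^sub>R v0" by (simp add: vec_eq_iff Am_mult ev)
  then have eigm: "is_eigenvalue Am m" unfolding is_eigenvalue_def using v0nz by blast
  obtain zz where zz: "zz \<noteq> xstar" using exists_other by blast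
  define e where "e = (axis zz 1 :: real^'a)"
  have if01: "a * (if P then 1 else 0) = (if P then a else (0::real))" for a P by simp
  have if02: "(if P then a else 0) * b = (if P then a * b else (0::real))" for a b P by simp
  have Fe: "F e = \<pi> zz * Qm zz zz" unfolding F_def e_def axis_def by (simp add: if01 if02)
  have if03: "(if P then 1 else 0)\<^sup>2 = (if P then 1 else (0::real))" for P by simp
  have Ge: "G e = \<pi> zz" unfolding G_def e_def axis_def by (simp add: if01 if02 if03)
  have "m * \<pi> zz \<le> \<pi> zz * Qm zz zz" using low[of e] Fe Ge by simp
  also have "\<dots> < 0" using Qdiag_neg[OF zz] pi_pos[rule_format, of zz] by (simp add: mult_pos_neg)
  finally have "m < 0" using pi_pos[rule_format, of zz] by (simp add: mult_less_0_iff)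
  then show ?thesis using eigm by blast
qed

end

context setting begin

lemma eigk_le: "eig_k Am 2 \<le> - gam"
proof -
  define S where "S = {\<mu>. is_eigenvalue Am \<mu> \<and> 2 \<le> eig_count Am \<mu>}"
  have fS: "finite S" unfolding S_def by (rule finite_subset[OF _ eig_finite]) auto
  have fin: "finite {\<mu>. is_eigenvalue Am \<mu> \<and> t \<le> \<mu>}" for t
    by (rule finite_subset[OF _ eig_finite]) auto
  obtain m where m: "is_eigenvalue Am m" "m < 0" using exists_neg_eig by blast
  have "m \<in> S"
  proof -
    have sub: "{m, 0} \<subseteq> {\<mu>. is_eigenvalue Am \<mu> \<and> m \<le> \<mu>}" using m zero_eig by auto
    have "(\<Sum>\<mu>\<in>{m, 0}. dim (eigenspace_of Am \<mu>)) \<le> eig_count Am m"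
      unfolding eig_count_def by (rule sum_mono2[OF fin sub]) simp
    moreover have "(\<Sum>\<mu>\<in>{m, 0}. dim (eigenspace_of Am \<mu>)) = dim (eigenspace_of Am m) + dim (eigenspace_of Am 0)"
      using m(2) by simp
    moreover have "dim (eigenspace_of Am m) \<ge> 1" by (rule dim_pos[OF m(1)])
    moreover have "dim (eigenspace_of Am 0) \<ge> 1" by (rule dim_pos[OF zero_eig])
    ultimately show ?thesis unfolding S_def using m(1) by simp
  qed
  then have nS: "S \<noteq> {}" by blast
  have up: "\<mu> \<le> - gam" if mS: "\<mu> \<in> S" for \<mu>
  proof (rule ccontr)
    assume "\<not> \<mu> \<le> - gam"
    then have gt: "\<mu> > - gam" by simp
    have sub: "{\<mu>'. is_eigenvalue Am \<mu>' \<and> \<mu> \<le> \<mu>'} \<subseteq> {0}"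
      using eigval_cases gt by force
    have "eig_count Am \<mu> \<le> (\<Sum>\<mu>'\<in>{0}. dim (eigenspace_of Am \<mu>'))"
      unfolding eig_count_def by (rule sum_mono2[OF _ sub]) simp_all
    also have "\<dots> \<le> 1" using dim_eig0 by simp
    finally show False using mS unfolding S_def by simp
  qed
  show ?thesis unfolding eig_k_def S_def[symmetric] using fS nS up by (simp add: Max_le_iff)
qed

lemma gap_ge: "Gap Qm \<ge> gam"
  using eigk_le unfolding Gap_def Am_def[symmetric] by simp

lemma kappa_eq: "kappa p \<alpha> \<nu> = (1 - th) ^ 3 / 2"
  unfolding kappa_def th_def by simp

lemma kappa_pos: "kappa p \<alpha> \<nu> > 0"
  unfolding kappa_eq using th_lt1 by simp

lemma main1: "Gap Qm \<ge> kappa p \<alpha> \<nu> * h Pn / E"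
proof -
  have a: "(1 - th) ^ 3 \<le> (1 - th) ^ 2" using th_lt1 th_pos by (intro power_decreasing) auto
  have "kappa p \<alpha> \<nu> * h Pn / E = (1 - th) ^ 3 / 2 * (h Pn / E)" unfolding kappa_eq by simp
  also have "\<dots> \<le> (1 - th) ^ 2 / 2 * (h Pn / E)"
    using a hPE_pos by (intro mult_right_mono) auto
  also have "\<dots> = gam" unfolding gam_def by (simp add: mult.commute)
  finally show ?thesis using gap_ge by linarith
qed

lemma main2: "2 * Gap Qm / kappa p \<alpha> \<nu> \<ge> 2 * h Pn / E"
proof -
  have k: "kappa p \<alpha> \<nu> > 0" by (rule kappa_pos)
  have "2 * h Pn / E = 2 * (kappa p \<alpha> \<nu> * h Pn / E) / kappa p \<alpha> \<nu>" using k by simp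
  also have "\<dots> \<le> 2 * Gap Qm / kappa p \<alpha> \<nu>"
    using main1 k by (intro divide_right_mono mult_left_mono) auto
  finally show ?thesis .
qed

end

context setting begin

lemma E_expand: "E = (\<Sum>x\<in>UNIV. \<Sum>y\<in>N x. \<pi> x * h (\<pi> y / \<pi> x))"
  unfolding E_def expect_def Z_def Zh_def by (simp add: sum_distrib_left)

lemma swapN: "(\<Sum>x\<in>UNIV. \<Sum>y\<in>N x. f x y) = (\<Sum>x\<in>UNIV. \<Sum>y\<in>N x. (f y x :: real))"
proof -
  have "(\<Sum>x\<in>UNIV. \<Sum>y\<in>N x. f x y) = (\<Sum>x\<in>UNIV. \<Sum>y\<in>UNIV. if y \<in> N x then f x y else 0)"
    by (simp add: sum_if_UNIV)
  also have "\<dots> = (\<Sum>y\<in>UNIV. \<Sum>x\<in>UNIV. if y \<in> N x then f x y else 0)" by (rule sum.swap)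
  also have "\<dots> = (\<Sum>y\<in>UNIV. \<Sum>x\<in>UNIV. if x \<in> N y then f x y else 0)"
  proof (intro sum.cong refl)
    fix y x
    have "y \<in> N x \<longleftrightarrow> x \<in> N y" using N_sym by blast
    then show "(if y \<in> N x then f x y else 0) = (if x \<in> N y then f x y else 0)" by simp
  qed
  also have "\<dots> = (\<Sum>y\<in>UNIV. \<Sum>x\<in>N y. f x y)" by (simp add: sum_if_UNIV)
  finally show ?thesis .
qed

lemma sumN_const: "(\<Sum>x\<in>UNIV. \<Sum>y\<in>N x. g x) = (\<Sum>x\<in>UNIV. real (card (N x)) * (g x :: real))"
  by simp

definition "rest = (\<Sum>x\<in>UNIV. if x \<noteq> xstar then \<pi> x else 0)"

lemma rest_le: "rest \<le> beta"
proof -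
  have "rest \<le> (\<Sum>x\<in>UNIV. if x \<noteq> xstar then \<pi> (T x) / Pn else 0)"
    unfolding rest_def
  proof (rule sum_mono)
    fix x show "(if x \<noteq> xstar then \<pi> x else 0) \<le> (if x \<noteq> xstar then \<pi> (T x) / Pn else 0)"
      using T_nbr Pn_pos unfolding Pn_def by (auto simp: field_simps)
  qed
  also have "\<dots> = (\<Sum>x\<in>UNIV. if x \<noteq> xstar then \<pi> (T x) else 0) / Pn"
    unfolding sum_divide_distrib by (rule sum.cong[OF refl]) simp
  also have "(\<Sum>x\<in>UNIV. if x \<noteq> xstar then \<pi> (T x) else 0) \<le> Pa"
  proof -
    have "(\<Sum>x\<in>UNIV. if x \<noteq> xstar then \<pi> (T x) else 0)
        = (\<Sum>x\<in>UNIV. \<Sum>y\<in>UNIV. if x \<noteq> xstar \<and> T x = y then \<pi> y else 0)"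
      by (rule sum.cong[OF refl]) (auto simp: sum.delta)
    also have "\<dots> = (\<Sum>y\<in>UNIV. \<Sum>x\<in>UNIV. if x \<noteq> xstar \<and> T x = y then \<pi> y else 0)" by (rule sum.swap)
    also have "\<dots> \<le> (\<Sum>y\<in>UNIV. \<Sum>x\<in>UNIV. if x \<in> N y then \<pi> y else 0)"
    proof (intro sum_mono)
      fix y x
      show "(if x \<noteq> xstar \<and> T x = y then \<pi> y else 0) \<le> (if x \<in> N y then \<pi> y else 0)"
        using T_nbr N_sym pi_pos by (auto intro: less_imp_le)
    qed
    also have "\<dots> = (\<Sum>y\<in>UNIV. real (card (N y)) * \<pi> y)" by (simp add: sum_if_UNIV)
    also have "\<dots> \<le> (\<Sum>y\<in>UNIV. Pa * \<pi> y)"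
      using N_card pi_pos unfolding Pa_def by (intro sum_mono mult_right_mono) (auto intro: less_imp_le)
    also have "\<dots> = Pa" using pi_sum by (simp add: sum_distrib_left[symmetric])
    finally show ?thesis .
  qed
  then have "(\<Sum>x\<in>UNIV. if x \<noteq> xstar then \<pi> (T x) else 0) / Pn \<le> Pa / Pn"
    using Pn_pos by (simp add: divide_right_mono)
  finally show ?thesis unfolding beta_def .
qed

definition "R = (\<Sum>x\<in>UNIV. real (card (N x)) * (if x \<noteq> xstar then \<pi> x else 0))"

lemma R_le: "R \<le> Pa * beta"
proof -
  have "R \<le> (\<Sum>x\<in>UNIV. Pa * (if x \<noteq> xstar then \<pi> x else 0))"
    unfolding R_def using N_card pi_pos unfolding Pa_def
    by (intro sum_mono mult_right_mono) (auto intro: less_imp_le)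
  also have "\<dots> = Pa * rest" unfolding rest_def by (simp add: sum_distrib_left)
  also have "\<dots> \<le> Pa * beta" using rest_le Pa_pos by (intro mult_left_mono) auto
  finally show ?thesis .
qed

lemma E_le_gen:
  assumes "\<And>x y. y \<in> N x \<Longrightarrow> \<pi> x * h (\<pi> y / \<pi> x) \<le> b x y"
  shows "E \<le> (\<Sum>x\<in>UNIV. \<Sum>y\<in>N x. b x y)"
  unfolding E_expand using assms by (intro sum_mono) auto

lemma sum_two_sided:
  "(\<Sum>x\<in>UNIV. \<Sum>y\<in>N x. (if x \<noteq> xstar then \<pi> x else 0) + (if y \<noteq> xstar then \<pi> y else 0)) = 2 * R"
proof -
  have "(\<Sum>x\<in>UNIV. \<Sum>y\<in>N x. (if x \<noteq> xstar then \<pi> x else 0) + (if y \<noteq> xstar then \<pi> y else 0))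
     = (\<Sum>x\<in>UNIV. \<Sum>y\<in>N x. (if x \<noteq> xstar then \<pi> x else 0)) + (\<Sum>x\<in>UNIV. \<Sum>y\<in>N x. (if y \<noteq> xstar then \<pi> y else 0))"
    by (simp add: sum.distrib)
  also have "(\<Sum>x\<in>UNIV. \<Sum>y\<in>N x. (if y \<noteq> xstar then \<pi> y else 0)) = (\<Sum>x\<in>UNIV. \<Sum>y\<in>N x. (if x \<noteq> xstar then \<pi> x else 0))"
    by (rule swapN)
  also have "(\<Sum>x\<in>UNIV. \<Sum>y\<in>N x. (if x \<noteq> xstar then \<pi> x else 0)) = R"
    unfolding R_def by (rule sumN_const)
  finally show ?thesis by simp
qed

lemma pow_facts: "p powr (\<nu> - \<alpha>) = Pn / Pa" "p powr (\<nu> - 2 * \<alpha>) = Pn / (Pa * Pa)"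
  unfolding Pn_def Pa_def by (simp_all add: powr_diff powr_add[symmetric])

lemma case1:
  assumes hh: "\<forall>u>0. h u = 1 + u"
  shows "2 * Gap Qm / kappa p \<alpha> \<nu> \<ge> p powr (\<nu> - \<alpha>)"
proof -
  have "E \<le> (\<Sum>x\<in>UNIV. \<Sum>y\<in>N x. \<pi> x + \<pi> y)"
  proof (rule E_le_gen)
    fix x y
    have "\<pi> y / \<pi> x > 0" using pi_pos by simp
    then show "\<pi> x * h (\<pi> y / \<pi> x) \<le> \<pi> x + \<pi> y" using hh pi_pos[rule_format, of x]
      by (simp add: field_simps)
  qed
  also have "\<dots> = (\<Sum>x\<in>UNIV. \<Sum>y\<in>N x. \<pi> x) + (\<Sum>x\<in>UNIV. \<Sum>y\<in>N x. \<pi> y)" by (simp add: sum.distrib)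
  also have "(\<Sum>x\<in>UNIV. \<Sum>y\<in>N x. \<pi> y) = (\<Sum>x\<in>UNIV. \<Sum>y\<in>N x. \<pi> x)" by (rule swapN)
  also have "(\<Sum>x\<in>UNIV. \<Sum>y\<in>N x. \<pi> x) \<le> Pa"
  proof -
    have "(\<Sum>x\<in>UNIV. \<Sum>y\<in>N x. \<pi> x) = (\<Sum>x\<in>UNIV. real (card (N x)) * \<pi> x)" by (rule sumN_const)
    also have "\<dots> \<le> (\<Sum>x\<in>UNIV. Pa * \<pi> x)"
      using N_card pi_pos unfolding Pa_def by (intro sum_mono mult_right_mono) (auto intro: less_imp_le)
    also have "\<dots> = Pa" using pi_sum by (simp add: sum_distrib_left[symmetric])
    finally show ?thesis .
  qed
  finally have E2: "E \<le> 2 * Pa" by simp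
  have hP: "h Pn = 1 + Pn" using hh Pn_pos by simp
  have "Pn * E \<le> Pn * (2 * Pa)" using E2 Pn_pos by (intro mult_left_mono) auto
  also have "\<dots> \<le> 2 * (1 + Pn) * Pa" using Pa_pos by (simp add: algebra_simps)
  finally have "Pn / Pa \<le> 2 * (1 + Pn) / E" using Pa_pos E_pos by (simp add: field_simps)
  then have "p powr (\<nu> - \<alpha>) \<le> 2 * h Pn / E" unfolding pow_facts hP .
  then show ?thesis using main2 by linarith
qed

lemma case2:
  assumes hh: "\<forall>u>0. h u = min 1 u"
  shows "2 * Gap Qm / kappa p \<alpha> \<nu> \<ge> p powr (\<nu> - 2 * \<alpha>)"
proof -
  have "E \<le> (\<Sum>x\<in>UNIV. \<Sum>y\<in>N x. (if x \<noteq> xstar then \<pi> x else 0) + (if y \<noteq> xstar then \<pi> y else 0))"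
  proof (rule E_le_gen)
    fix x y assume yN: "y \<in> N x"
    have px: "\<pi> x > 0" and py: "\<pi> y > 0" using pi_pos by auto
    have "\<pi> y / \<pi> x > 0" using px py by simp
    then have "\<pi> x * h (\<pi> y / \<pi> x) = \<pi> x * min 1 (\<pi> y / \<pi> x)" using hh by simp
    also have "\<dots> = min (\<pi> x) (\<pi> y)" using px by (simp add: min_def field_simps)
    also have "\<dots> \<le> (if x \<noteq> xstar then \<pi> x else 0) + (if y \<noteq> xstar then \<pi> y else 0)"
      using yN N_irrefl px py by auto
    finally show "\<pi> x * h (\<pi> y / \<pi> x) \<le> (if x \<noteq> xstar then \<pi> x else 0) + (if y \<noteq> xstar then \<pi> y else 0)" .
  qed
  also have "\<dots> = 2 * R" by (rule sum_two_sided)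
  also have "\<dots> \<le> 2 * (Pa * beta)" using R_le by simp
  finally have E2: "E \<le> 2 * (Pa * Pa / Pn)" unfolding beta_def by simp
  have hP: "h Pn = 1" using hh Pn_gt by simp
  have "Pn * E \<le> 2 * (Pa * Pa)" using E2 Pn_pos by (simp add: field_simps)
  then have "Pn / (Pa * Pa) \<le> 2 * 1 / E" using Pa_pos E_pos by (simp add: field_simps)
  then have "p powr (\<nu> - 2 * \<alpha>) \<le> 2 * h Pn / E" unfolding pow_facts hP .
  then show ?thesis using main2 by linarith
qed

end

context setting begin

lemma case3:
  assumes hh: "\<forall>u>0. h u = sqrt u"
  shows "2 * Gap Qm / kappa p \<alpha> \<nu> \<ge> p powr (\<nu> / 2) / (p powr (2 * \<alpha> - \<nu>) + p powr (\<alpha> - \<nu> / 2))"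
proof -
  define sP where "sP = p powr (\<nu> / 2)"
  have sP0: "sP > 0" unfolding sP_def using p_gt by simp
  have sPsq: "sP * sP = Pn" unfolding sP_def Pn_def by (simp add: powr_add[symmetric])
  have hP: "h Pn = sP" using hh Pn_pos sP0 sPsq[symmetric] by (simp add: real_sqrt_mult_self)
  have pw1: "p powr (2 * \<alpha> - \<nu>) = Pa * Pa / Pn" unfolding Pa_def Pn_def by (simp add: powr_diff powr_add[symmetric])
  have pw2: "p powr (\<alpha> - \<nu> / 2) = Pa / sP" unfolding Pa_def sP_def by (simp add: powr_diff)
  define b where "b x y = ((if x \<noteq> xstar then \<pi> x else 0) + (if y \<noteq> xstar then \<pi> y else 0)) / 2
      + (if x = xstar then sqrt (\<pi> y) else 0) + (if y = xstar then sqrt (\<pi> x) else 0)" for x y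
  have "E \<le> (\<Sum>x\<in>UNIV. \<Sum>y\<in>N x. b x y)"
  proof (rule E_le_gen)
    fix x y assume yN: "y \<in> N x"
    have px: "\<pi> x > 0" and py: "\<pi> y > 0" using pi_pos by auto
    have "\<pi> y / \<pi> x > 0" using px py by simp
    then have "\<pi> x * h (\<pi> y / \<pi> x) = \<pi> x * sqrt (\<pi> y / \<pi> x)" using hh by simp
    also have "\<dots> = sqrt (\<pi> x * \<pi> y)"
    proof -
      have "\<pi> x = sqrt (\<pi> x) * sqrt (\<pi> x)" using px by simp
      then have "\<pi> x * sqrt (\<pi> y / \<pi> x) = sqrt (\<pi> x) * sqrt (\<pi> x) * (sqrt (\<pi> y) / sqrt (\<pi> x))"
        by (metis real_sqrt_divide)
      also have "\<dots> = sqrt (\<pi> x) * sqrt (\<pi> y)"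
      proof -
        have gen: "s \<noteq> 0 \<Longrightarrow> s * s * (t / s) = s * (t::real)" for s t by (simp add: field_simps)
        have "sqrt (\<pi> x) \<noteq> 0" using px by simp
        then show ?thesis by (rule gen)
      qed
      finally show ?thesis by (simp add: real_sqrt_mult)
    qed
    also have "\<dots> \<le> b x y"
    proof (cases "x = xstar")
      case True
      then have yx: "y \<noteq> xstar" using yN N_irrefl by auto
      have "sqrt (\<pi> x * \<pi> y) \<le> sqrt (\<pi> y)"
        using pi_le1[of x] py by (intro real_sqrt_le_mono) (simp add: mult_left_le_one_le less_imp_le)
      moreover have "b x y = \<pi> y / 2 + sqrt (\<pi> y)" unfolding b_def using True yx by simp
      ultimately show ?thesis using py by linarith
    next
      case False
      show ?thesis
      proof (cases "y = xstar")
        case True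
        have "sqrt (\<pi> x * \<pi> y) \<le> sqrt (\<pi> x)"
          using pi_le1[of y] px by (intro real_sqrt_le_mono) (simp add: mult_right_le_one_le less_imp_le)
        moreover have "b x y = \<pi> x / 2 + sqrt (\<pi> x)" unfolding b_def using True False by simp
        ultimately show ?thesis using px by linarith
      next
        case False2: False
        have "sqrt (\<pi> x * \<pi> y) \<le> (\<pi> x + \<pi> y) / 2" using px py by (intro arith_geo_mean_sqrt) auto
        then show ?thesis unfolding b_def using False False2 by simp
      qed
    qed
    finally show "\<pi> x * h (\<pi> y / \<pi> x) \<le> b x y" .
  qed
  also have "(\<Sum>x\<in>UNIV. \<Sum>y\<in>N x. b x y) =
      ((\<Sum>x\<in>UNIV. \<Sum>y\<in>N x. (if x \<noteq> xstar then \<pi> x else 0)) + (\<Sum>x\<in>UNIV. \<Sum>y\<in>N x. (if y \<noteq> xstar then \<pi> y else 0))) / 2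
      + (\<Sum>x\<in>UNIV. \<Sum>y\<in>N x. (if x = xstar then sqrt (\<pi> y) else 0))
      + (\<Sum>x\<in>UNIV. \<Sum>y\<in>N x. (if y = xstar then sqrt (\<pi> x) else 0))"
    unfolding b_def by (simp only: sum.distrib add_divide_distrib sum_divide_distrib)
  also have "(\<Sum>x\<in>UNIV. \<Sum>y\<in>N x. (if y = xstar then sqrt (\<pi> x) else 0)) = (\<Sum>x\<in>UNIV. \<Sum>y\<in>N x. (if x = xstar then sqrt (\<pi> y) else 0))"
    by (rule swapN)
  also have "(\<Sum>x\<in>UNIV. \<Sum>y\<in>N x. (if x = xstar then sqrt (\<pi> y) else 0)) = (\<Sum>y\<in>N xstar. sqrt (\<pi> y))"
  proof -
    have "(\<Sum>x\<in>UNIV. \<Sum>y\<in>N x. (if x = xstar then sqrt (\<pi> y) else 0)) = (\<Sum>x\<in>UNIV. if x = xstar then (\<Sum>y\<in>N x. sqrt (\<pi> y)) else 0)"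
      by (rule sum.cong[OF refl]) simp
    also have "\<dots> = (\<Sum>y\<in>N xstar. sqrt (\<pi> y))" by simp
    finally show ?thesis .
  qed
  also have "(\<Sum>x\<in>UNIV. \<Sum>y\<in>N x. (if x \<noteq> xstar then \<pi> x else 0)) + (\<Sum>x\<in>UNIV. \<Sum>y\<in>N x. (if y \<noteq> xstar then \<pi> y else 0)) = 2 * R"
    by (rule sum_two_sided[unfolded sum.distrib])
  finally have Eb: "E \<le> R + 2 * (\<Sum>y\<in>N xstar. sqrt (\<pi> y))" by simp
  have W: "(\<Sum>y\<in>N xstar. sqrt (\<pi> y)) \<le> Pa / sP"
  proof -
    have "(\<Sum>y\<in>N xstar. sqrt (\<pi> y)) \<le> (\<Sum>y\<in>N xstar. (\<pi> y * sP + 1 / sP) / 2)"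
    proof (rule sum_mono)
      fix y
      have "sqrt (\<pi> y * sP * (1 / sP)) \<le> (\<pi> y * sP + 1 / sP) / 2"
        using pi_pos[rule_format, of y] sP0 by (intro arith_geo_mean_sqrt) auto
      then show "sqrt (\<pi> y) \<le> (\<pi> y * sP + 1 / sP) / 2" using sP0 by simp
    qed
    also have "\<dots> = ((\<Sum>y\<in>N xstar. \<pi> y * sP) + (\<Sum>y\<in>N xstar. 1 / sP)) / 2"
      by (simp only: sum_divide_distrib[symmetric] sum.distrib)
    also have "\<dots> = (sP * (\<Sum>y\<in>N xstar. \<pi> y) + real (card (N xstar)) / sP) / 2"
      by (simp add: sum_distrib_left mult.commute)
    also have "\<dots> \<le> (sP * beta + Pa / sP) / 2"
    proof -
      have "(\<Sum>y\<in>N xstar. \<pi> y) = (\<Sum>y\<in>UNIV. if y \<in> N xstar then \<pi> y else 0)" by (simp add: sum_if_UNIV)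
      also have "\<dots> \<le> rest" unfolding rest_def
        using N_irrefl pi_pos by (intro sum_mono) (auto intro: less_imp_le)
      also have "\<dots> \<le> beta" by (rule rest_le)
      finally have a: "(\<Sum>y\<in>N xstar. \<pi> y) \<le> beta" .
      have b: "real (card (N xstar)) / sP \<le> Pa / sP" using N_card sP0 unfolding Pa_def by (simp add: divide_right_mono)
      have "sP * (\<Sum>y\<in>N xstar. \<pi> y) + real (card (N xstar)) / sP \<le> sP * beta + Pa / sP"
        using add_mono[OF mult_left_mono[OF a] b] sP0 by simp
      then show ?thesis by (rule divide_right_mono) simp
    qed
    also have "\<dots> = Pa / sP" unfolding beta_def using sP0 sPsq[symmetric] by (simp add: field_simps)
    finally show ?thesis .
  qed
  define X where "X = Pa * Pa / Pn"
  define Y where "Y = Pa / sP"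
  have X0: "X > 0" unfolding X_def using Pa_pos Pn_pos by simp
  have Y0: "Y > 0" unfolding Y_def using Pa_pos sP0 by simp
  have "R \<le> X" using R_le unfolding X_def beta_def by simp
  then have EXY: "E \<le> 2 * (X + Y)" using Eb W X0 Y0 unfolding Y_def by (smt (verit))
  have "sP / (X + Y) = 2 * sP / (2 * (X + Y))" by (metis mult_divide_mult_cancel_left_if zero_neq_numeral)
  also have "\<dots> \<le> 2 * sP / E"
    using EXY E_pos sP0 X0 Y0 by (intro divide_left_mono) auto
  finally have "p powr (\<nu> / 2) / (p powr (2 * \<alpha> - \<nu>) + p powr (\<alpha> - \<nu> / 2)) \<le> 2 * h Pn / E"
    unfolding pw1 pw2 hP X_def[symmetric] Y_def[symmetric] sP_def[symmetric] .
  then show ?thesis using main2 by linarith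
qed

end

theorem theorem1:
  fixes \<pi> :: "'a::finite \<Rightarrow> real"
    and N :: "'a \<Rightarrow> 'a set"
    and p \<alpha> \<nu> :: real
    and xstar :: 'a
    and T :: "'a \<Rightarrow> 'a"
    and h :: "real \<Rightarrow> real"
  assumes card2: "CARD('a) \<ge> 2"
    and pi_pos: "\<forall>x. \<pi> x > 0"
    and pi_sum: "(\<Sum>x\<in>UNIV. \<pi> x) = 1"
    and p_gt: "p > 1"
    and alpha_pos: "\<alpha> > 0"
    and N_sym: "\<forall>x y. y \<in> N x \<longleftrightarrow> x \<in> N y"
    and N_irrefl: "\<forall>x. x \<notin> N x"
    and N_irred: "\<forall>K. stochastic K \<and> (\<forall>x y. K x y > 0 \<longleftrightarrow> y \<in> N x) \<longrightarrow> irreducible_mat K"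
    and N_card: "\<forall>x. real (card (N x)) \<le> p powr \<alpha>"
    and nu_gt: "\<nu> > \<alpha>"
    and T_fix: "T xstar = xstar"
    and T_nbr: "\<forall>x. x \<noteq> xstar \<longrightarrow> T x \<in> N x \<and> \<pi> (T x) \<ge> p powr \<nu> * \<pi> x"
    and h_pos: "\<forall>u>0. h u > 0"
    and h_mono: "mono_on {0<..} h"
    and h_bal: "\<forall>u>0. h u = u * h (1 / u)"
  shows "Gap (Qh h \<pi> N) \<ge> kappa p \<alpha> \<nu> * h (p powr \<nu>) / expect \<pi> (Zh h \<pi> N)
     \<and> ((\<forall>u>0. h u = 1 + u) \<longrightarrow>
          2 * Gap (Qh h \<pi> N) / kappa p \<alpha> \<nu> \<ge> p powr (\<nu> - \<alpha>))
     \<and> ((\<forall>u>0. h u = min 1 u) \<longrightarrow>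
          2 * Gap (Qh h \<pi> N) / kappa p \<alpha> \<nu> \<ge> p powr (\<nu> - 2 * \<alpha>))
     \<and> ((\<forall>u>0. h u = sqrt u) \<longrightarrow>
          2 * Gap (Qh h \<pi> N) / kappa p \<alpha> \<nu> \<ge>
            p powr (\<nu> / 2) / (p powr (2 * \<alpha> - \<nu>) + p powr (\<alpha> - \<nu> / 2)))"
proof -
  interpret S: setting \<pi> N p \<alpha> \<nu> xstar T h
    by (rule setting.intro[OF card2 pi_pos pi_sum p_gt alpha_pos N_sym N_irrefl N_card nu_gt T_fix T_nbr h_pos h_mono h_bal])
  have 1: "Gap (Qh h \<pi> N) \<ge> kappa p \<alpha> \<nu> * h (p powr \<nu>) / expect \<pi> (Zh h \<pi> N)"
    using S.main1 unfolding S.Qm_def S.Pn_def S.E_def S.Z_def .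
  have 2: "(\<forall>u>0. h u = 1 + u) \<longrightarrow> 2 * Gap (Qh h \<pi> N) / kappa p \<alpha> \<nu> \<ge> p powr (\<nu> - \<alpha>)"
    using S.case1 unfolding S.Qm_def by blast
  have 3: "(\<forall>u>0. h u = min 1 u) \<longrightarrow> 2 * Gap (Qh h \<pi> N) / kappa p \<alpha> \<nu> \<ge> p powr (\<nu> - 2 * \<alpha>)"
    using S.case2 unfolding S.Qm_def by blast
  have 4: "(\<forall>u>0. h u = sqrt u) \<longrightarrow> 2 * Gap (Qh h \<pi> N) / kappa p \<alpha> \<nu> \<ge>
            p powr (\<nu> / 2) / (p powr (2 * \<alpha> - \<nu>) + p powr (\<alpha> - \<nu> / 2))"
    using S.case3 unfolding S.Qm_def by blast
  show ?thesis using 1 2 3 4 by blast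
qed

end
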